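(* There is an absolute constant $c>0$ such that for every finite set $\Omega$ with $|\Omega|\ge2$ and every $0<\varepsilon<1/2$ there exist $n_0>0$ and a random variable $\Theta$ (whose distribution depends only on $\varepsilon,\Omega$) taking integer values with $0<\Theta<((2\ln|\Omega|)/\varepsilon)^c$ such that for all $n>n_0$ and all $\mu\in\mathcal P(\Omega^n)$ the following hold, where $I\subset[n]$ is a uniformly random subset of size $\Theta$ and, given $I$, $\sigma\in\Omega^I$ is drawn from $\mu_I$: (i) $\mathbb E[D_\square(\mu^{I,\sigma},\bar\mu^{I,\sigma})]<\varepsilon$; (ii) letting $\bar\mu^{I}=\mathbb E[\bar\mu^{I,\sigma}\mid I]=\sum_{\sigma\in\Omega^I}\mu_I(\sigma)\bar\mu^{I,\sigma}\in\mathcal P(\Omega^n)$, we have $\mathbb E[D_\square(\mu,\bar\mu^{I})]<\varepsilon$.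
   Context: $\mathcal P(\mathcal X)$ denotes the set of probability measures on a finite set $\mathcal X$; $[n]=\{1,\dots,n\}$. For $\mu\in\mathcal P(\Omega^n)$ and $I\subset[n]$, $\mu_I$ is the joint marginal distribution of the coordinates in $I$, and $\mu_i=\mu_{\{i\}}$. For $\sigma\in\Omega^I$ let $S^{I,\sigma}=\{\tau\in\Omega^n:\tau_i=\sigma_i\ \forall i\in I\}$ and let $\mu^{I,\sigma}=\mu[\cdot\,|S^{I,\sigma}]$ be the conditional distribution if $\mu(S^{I,\sigma})>0$, and the uniform distribution on $S^{I,\sigma}$ otherwise. Let $\bar\mu^{I,\sigma}=\bigotimes_{i=1}^n\mu^{I,\sigma}_i$ be the product measure with the same one-coordinate marginals as $\mu^{I,\sigma}$. For $\mu,\nu\in\mathcal P(\Omega^n)$ let $\Gamma(\mu,\nu)$ be the set of couplings, i.e. probability measures $\gamma$ on $\Omega^n\times\Omega^n$ whose first and second marginals are $\mu$ and $\nu$. The cut metric is $D_\square(\mu,\nu)=\frac1n\min_{\gamma\in\Gamma(\mu,\nu)}\max_{I\subset[n],\,B\subset\Omega^n\times\Omega^n,\,\omega\in\Omega}\Big|\sum_{i\in I}\sum_{(\sigma,\tau)\in B}\gamma(\sigma,\tau)\big(\mathbf 1\{\sigma_i=\omega\}-\mathbf 1\{\tau_i=\omega\}\big)\Big|$. *)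

theory Defs
  imports "HOL-Probability.Probability"
begin

text \<open>Configurations: Omega^n is rendered as PiE {..<n} (\<lambda>_. Omega), i.e. functions
  nat \<Rightarrow> nat, with coordinates [n] = {0,..,n-1} and value undefined outside [n].
  A measure mu in P(Omega^n) is a pmf whose support lies in this set.\<close>

definition configs :: "nat \<Rightarrow> nat set \<Rightarrow> (nat \<Rightarrow> nat) set" where
  "configs n \<Omega> = PiE {..<n} (\<lambda>_. \<Omega>)"

definition couplings :: "'b pmf \<Rightarrow> 'b pmf \<Rightarrow> ('b \<times> 'b) pmf set" where
  "couplings \<mu> \<nu> = {\<gamma>. map_pmf fst \<gamma> = \<mu> \<and> map_pmf snd \<gamma> = \<nu>}"

definition cut_value :: "nat \<Rightarrow> nat set \<Rightarrow> ((nat \<Rightarrow> nat) \<times> (nat \<Rightarrow> nat)) pmf \<Rightarrow> real" where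
  "cut_value n \<Omega> \<gamma> = Max {\<bar>\<Sum>i\<in>I. \<Sum>p\<in>B. pmf \<gamma> p *
        ((if fst p i = \<omega> then 1 else 0) - (if snd p i = \<omega> then 1 else 0))\<bar> | I B \<omega>.
        I \<subseteq> {..<n} \<and> B \<subseteq> configs n \<Omega> \<times> configs n \<Omega> \<and> \<omega> \<in> \<Omega>}"

text \<open>Cut metric D_box (the minimum over couplings is written as an infimum).\<close>
definition cut_dist :: "nat \<Rightarrow> nat set \<Rightarrow> (nat \<Rightarrow> nat) pmf \<Rightarrow> (nat \<Rightarrow> nat) pmf \<Rightarrow> real" where
  "cut_dist n \<Omega> \<mu> \<nu> = (1 / real n) * (INF \<gamma> \<in> couplings \<mu> \<nu>. cut_value n \<Omega> \<gamma>)"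

definition pinned :: "nat \<Rightarrow> nat set \<Rightarrow> nat set \<Rightarrow> (nat \<Rightarrow> nat) \<Rightarrow> (nat \<Rightarrow> nat) set" where
  "pinned n \<Omega> I \<sigma> = {\<tau> \<in> configs n \<Omega>. \<forall>i\<in>I. \<tau> i = \<sigma> i}"

definition cond_dist :: "nat \<Rightarrow> nat set \<Rightarrow> (nat \<Rightarrow> nat) pmf \<Rightarrow> nat set \<Rightarrow> (nat \<Rightarrow> nat) \<Rightarrow> (nat \<Rightarrow> nat) pmf" where
  "cond_dist n \<Omega> \<mu> I \<sigma> =
     (if measure_pmf.prob \<mu> (pinned n \<Omega> I \<sigma>) > 0 then cond_pmf \<mu> (pinned n \<Omega> I \<sigma>)
      else pmf_of_set (pinned n \<Omega> I \<sigma>))"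

definition prod_marg :: "nat \<Rightarrow> (nat \<Rightarrow> nat) pmf \<Rightarrow> (nat \<Rightarrow> nat) pmf" where
  "prod_marg n \<mu> = Pi_pmf {..<n} undefined (\<lambda>i. map_pmf (\<lambda>\<tau>. \<tau> i) \<mu>)"

definition marg :: "(nat \<Rightarrow> nat) pmf \<Rightarrow> nat set \<Rightarrow> (nat \<Rightarrow> nat) pmf" where
  "marg \<mu> I = map_pmf (\<lambda>\<tau>. restrict \<tau> I) \<mu>"

definition bar_mix :: "nat \<Rightarrow> nat set \<Rightarrow> (nat \<Rightarrow> nat) pmf \<Rightarrow> nat set \<Rightarrow> (nat \<Rightarrow> nat) pmf" where
  "bar_mix n \<Omega> \<mu> I = bind_pmf (marg \<mu> I) (\<lambda>\<sigma>. prod_marg n (cond_dist n \<Omega> \<mu> I \<sigma>))"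

definition rand_subset :: "nat \<Rightarrow> nat pmf \<Rightarrow> nat set pmf" where
  "rand_subset n \<Theta> = bind_pmf \<Theta> (\<lambda>\<theta>. pmf_of_set {I. I \<subseteq> {..<n} \<and> card I = \<theta>})"

definition rand_pin :: "nat \<Rightarrow> nat pmf \<Rightarrow> (nat \<Rightarrow> nat) pmf \<Rightarrow> (nat set \<times> (nat \<Rightarrow> nat)) pmf" where
  "rand_pin n \<Theta> \<mu> = bind_pmf (rand_subset n \<Theta>) (\<lambda>I. map_pmf (\<lambda>\<sigma>. (I, \<sigma>)) (marg \<mu> I))"

end

theory Submission
  imports Defs
begin


lemma exp_sq_le:
  fixes f :: "'a \<Rightarrow> real"
  assumes fin: "finite (set_pmf p)"
  shows "(measure_pmf.expectation p f)\<^sup>2 \<le> measure_pmf.expectation p (\<lambda>x. (f x)\<^sup>2)"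
proof -
  define c where "c = measure_pmf.expectation p f"
  have int: "\<And>g::'a\<Rightarrow>real. integrable (measure_pmf p) g" using fin by (rule integrable_measure_pmf_finite)
  have "0 \<le> measure_pmf.expectation p (\<lambda>x. (f x - c)\<^sup>2)" by (rule integral_nonneg_AE) auto
  also have "(\<lambda>x. (f x - c)\<^sup>2) = (\<lambda>x. (f x)\<^sup>2 - 2 * c * f x + c\<^sup>2)" by (auto simp: power2_eq_square algebra_simps)
  also have "measure_pmf.expectation p \<dots> = measure_pmf.expectation p (\<lambda>x. (f x)\<^sup>2) - 2 * c * c + c\<^sup>2"
    using int by (simp add: c_def)
  finally show ?thesis unfolding c_def by (simp add: power2_eq_square)
qed

lemma exp_sqrt_le:
  fixes f :: "'a \<Rightarrow> real"
  assumes fin: "finite (set_pmf p)" and nn: "\<And>x. x \<in> set_pmf p \<Longrightarrow> 0 \<le> f x"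
  shows "measure_pmf.expectation p (\<lambda>x. sqrt (f x)) \<le> sqrt (measure_pmf.expectation p f)"
proof -
  have "(measure_pmf.expectation p (\<lambda>x. sqrt (f x)))\<^sup>2 \<le> measure_pmf.expectation p (\<lambda>x. (sqrt (f x))\<^sup>2)"
    by (rule exp_sq_le[OF fin])
  also have "measure_pmf.expectation p (\<lambda>x. (sqrt (f x))\<^sup>2) = measure_pmf.expectation p f"
    by (intro integral_cong_AE) (auto simp: AE_measure_pmf_iff nn)
  finally show ?thesis by (simp add: real_le_rsqrt)
qed



definition Zf :: "nat set \<Rightarrow> nat \<Rightarrow> (nat \<Rightarrow> nat) \<times> (nat \<Rightarrow> nat) \<Rightarrow> real" where
  "Zf I \<omega> p = (\<Sum>i\<in>I. (if fst p i = \<omega> then 1 else 0) - (if snd p i = \<omega> then 1 else 0))"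

lemma finite_configs: "finite \<Omega> \<Longrightarrow> finite (configs n \<Omega>)"
  unfolding configs_def by (intro finite_PiE) auto

lemma cut_value_le:
  assumes fin: "finite \<Omega>" and ne: "\<Omega> \<noteq> {}"
    and supp: "set_pmf \<gamma> \<subseteq> configs n \<Omega> \<times> configs n \<Omega>"
    and bnd: "\<And>I \<omega>. I \<subseteq> {..<n} \<Longrightarrow> \<omega> \<in> \<Omega> \<Longrightarrow> measure_pmf.expectation \<gamma> (\<lambda>p. (Zf I \<omega> p)\<^sup>2) \<le> b"
  shows "cut_value n \<Omega> \<gamma> \<le> sqrt b" "0 \<le> cut_value n \<Omega> \<gamma>"
proof -
  define C where "C = configs n \<Omega>"
  have finC: "finite C" using fin by (simp add: C_def finite_configs)
  define S where "S = {\<bar>\<Sum>i\<in>I. \<Sum>p\<in>B. pmf \<gamma> p *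
        ((if fst p i = \<omega> then 1 else 0) - (if snd p i = \<omega> then 1 else 0))\<bar> | I B \<omega>.
        I \<subseteq> {..<n} \<and> B \<subseteq> configs n \<Omega> \<times> configs n \<Omega> \<and> \<omega> \<in> \<Omega>}"
  have cv: "cut_value n \<Omega> \<gamma> = Max S" unfolding cut_value_def S_def ..
  have Ssub: "S \<subseteq> (\<lambda>(I,B,\<omega>). \<bar>\<Sum>i\<in>I. \<Sum>p\<in>B. pmf \<gamma> p *
        ((if fst p i = \<omega> then 1 else 0) - (if snd p i = \<omega> then 1 else 0))\<bar>) ` (Pow {..<n} \<times> Pow (C \<times> C) \<times> \<Omega>)"
  proof
    fix s assume "s \<in> S"
    then obtain I B \<omega> where "s = \<bar>\<Sum>i\<in>I. \<Sum>p\<in>B. pmf \<gamma> p *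
        ((if fst p i = \<omega> then 1 else 0) - (if snd p i = \<omega> then 1 else 0))\<bar>"
      "I \<subseteq> {..<n}" "B \<subseteq> C \<times> C" "\<omega> \<in> \<Omega>" unfolding S_def C_def by blast
    then show "s \<in> (\<lambda>(I,B,\<omega>). \<bar>\<Sum>i\<in>I. \<Sum>p\<in>B. pmf \<gamma> p *
        ((if fst p i = \<omega> then 1 else 0) - (if snd p i = \<omega> then 1 else 0))\<bar>) ` (Pow {..<n} \<times> Pow (C \<times> C) \<times> \<Omega>)"
      by (intro image_eqI[where x="(I,B,\<omega>)"]) auto
  qed
  have finS: "finite S" by (rule finite_subset[OF Ssub]) (use finC fin in auto)
  obtain \<omega>0 where \<omega>0: "\<omega>0 \<in> \<Omega>" using ne by auto
  have neS: "S \<noteq> {}" unfolding S_def using \<omega>0 by blast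
  have el: "s \<le> sqrt b" if "s \<in> S" for s
  proof -
    obtain I B \<omega> where s: "s = \<bar>\<Sum>i\<in>I. \<Sum>p\<in>B. pmf \<gamma> p *
        ((if fst p i = \<omega> then 1 else 0) - (if snd p i = \<omega> then 1 else 0))\<bar>"
      and I: "I \<subseteq> {..<n}" and B: "B \<subseteq> C \<times> C" and \<omega>: "\<omega> \<in> \<Omega>"
      using \<open>s \<in> S\<close> unfolding S_def C_def by blast
    have finI: "finite I" using I finite_subset by blast
    have finB: "finite B" using B finC finite_subset by blast
    have "s = \<bar>\<Sum>p\<in>B. pmf \<gamma> p * Zf I \<omega> p\<bar>"
      unfolding s Zf_def by (subst sum.swap) (simp add: sum_distrib_left)
    also have "\<dots> \<le> (\<Sum>p\<in>B. \<bar>pmf \<gamma> p * Zf I \<omega> p\<bar>)" by (rule sum_abs)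
    also have "\<dots> \<le> (\<Sum>p\<in>C\<times>C. \<bar>pmf \<gamma> p * Zf I \<omega> p\<bar>)"
      by (rule sum_mono2) (use finC B in auto)
    also have "\<dots> = measure_pmf.expectation \<gamma> (\<lambda>p. sqrt ((Zf I \<omega> p)\<^sup>2))"
      by (subst integral_measure_pmf_real[where A="C\<times>C"]) (use finC supp in \<open>auto simp: C_def abs_mult pmf_nonneg mult.commute\<close>)
    also have "\<dots> \<le> sqrt (measure_pmf.expectation \<gamma> (\<lambda>p. (Zf I \<omega> p)\<^sup>2))"
      by (rule exp_sqrt_le) (use finC supp in \<open>auto simp: C_def intro: finite_subset\<close>)
    also have "\<dots> \<le> sqrt b" using bnd[OF I \<omega>] by simp
    finally show ?thesis .
  qed
  show "cut_value n \<Omega> \<gamma> \<le> sqrt b" unfolding cv using finS neS el by simp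
  have "0 \<le> \<bar>\<Sum>i\<in>{}. \<Sum>p\<in>{}. pmf \<gamma> p *
        ((if fst p i = \<omega>0 then 1 else 0) - (if snd p i = \<omega>0 then 1 else 0))\<bar>" by simp
  moreover have "\<bar>\<Sum>i\<in>{}. \<Sum>p\<in>{}. pmf \<gamma> p *
        ((if fst p i = \<omega>0 then 1 else 0) - (if snd p i = \<omega>0 then 1 else 0))\<bar> \<in> S"
    unfolding S_def using \<omega>0 by blast
  ultimately show "0 \<le> cut_value n \<Omega> \<gamma>" unfolding cv using finS by (meson Max_ge order_trans)
qed



definition pr :: "(nat \<Rightarrow> nat) pmf \<Rightarrow> nat \<Rightarrow> nat \<Rightarrow> real" where
  "pr \<nu> i \<omega> = measure_pmf.prob \<nu> {x. x i = \<omega>}"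
definition pr2 :: "(nat \<Rightarrow> nat) pmf \<Rightarrow> nat \<Rightarrow> nat \<Rightarrow> nat \<Rightarrow> real" where
  "pr2 \<nu> i j \<omega> = measure_pmf.prob \<nu> {x. x i = \<omega> \<and> x j = \<omega>}"
definition cv :: "(nat \<Rightarrow> nat) pmf \<Rightarrow> nat \<Rightarrow> nat \<Rightarrow> nat \<Rightarrow> real" where
  "cv \<nu> i j \<omega> = pr2 \<nu> i j \<omega> - pr \<nu> i \<omega> * pr \<nu> j \<omega>"
definition Qs :: "nat \<Rightarrow> nat set \<Rightarrow> (nat \<Rightarrow> nat) pmf \<Rightarrow> real" where
  "Qs n \<Omega> \<nu> = (\<Sum>i<n. \<Sum>j<n. \<Sum>\<omega>\<in>\<Omega>. (cv \<nu> i j \<omega>)\<^sup>2)"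

lemma exp_ind: "measure_pmf.expectation \<nu> (\<lambda>x. if P x then 1 else 0 :: real) = measure_pmf.prob \<nu> {x. P x}"
proof -
  have "(\<lambda>x. if P x then 1 else 0 :: real) = indicator {x. P x}" by (auto simp: indicator_def)
  then show ?thesis by simp
qed

lemma exp_pair_prod:
  fixes f g :: "'a \<Rightarrow> real"
  assumes "finite (set_pmf M)" "finite (set_pmf N)"
  shows "measure_pmf.expectation (pair_pmf M N) (\<lambda>p. f (fst p) * g (snd p)) =
         measure_pmf.expectation M f * measure_pmf.expectation N g"
proof -
  have "measure_pmf.expectation (pair_pmf M N) (\<lambda>p. f (fst p) * g (snd p)) =
        (\<Sum>p\<in>set_pmf M \<times> set_pmf N. f (fst p) * g (snd p) * pmf (pair_pmf M N) p)"
    by (rule integral_measure_pmf_real) (use assms in auto)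
  also have "\<dots> = (\<Sum>x\<in>set_pmf M. \<Sum>y\<in>set_pmf N. (f x * pmf M x) * (g y * pmf N y))"
    unfolding sum.cartesian_product by (rule sum.cong) (auto simp: pmf_pair algebra_simps)
  also have "\<dots> = (\<Sum>x\<in>set_pmf M. f x * pmf M x) * (\<Sum>y\<in>set_pmf N. g y * pmf N y)"
    by (simp add: sum_product)
  also have "\<dots> = measure_pmf.expectation M f * measure_pmf.expectation N g"
    by (subst (1 2) integral_measure_pmf_real) (use assms in auto)
  finally show ?thesis .
qed

lemma fin_supp_configs:
  assumes "finite \<Omega>" "set_pmf \<nu> \<subseteq> configs n \<Omega>"
  shows "finite (set_pmf \<nu>)"
  using assms finite_configs finite_subset by blast

lemma prod_marg_supp:
  assumes fin: "finite \<Omega>" and supp: "set_pmf \<nu> \<subseteq> configs n \<Omega>"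
  shows "set_pmf (prod_marg n \<nu>) \<subseteq> configs n \<Omega>"
proof
  fix y assume "y \<in> set_pmf (prod_marg n \<nu>)"
  then have y: "y \<in> PiE_dflt {..<n} undefined (set_pmf \<circ> (\<lambda>i. map_pmf (\<lambda>\<tau>. \<tau> i) \<nu>))"
    unfolding prod_marg_def by (simp add: set_Pi_pmf)
  show "y \<in> configs n \<Omega>" unfolding configs_def
  proof (rule PiE_I)
    fix i assume i: "i \<in> {..<n}"
    with y obtain \<tau> where "\<tau> \<in> set_pmf \<nu>" "y i = \<tau> i" by (auto simp: PiE_dflt_def)
    then show "y i \<in> \<Omega>" using supp i unfolding configs_def by (auto dest!: subsetD PiE_mem)
  next
    fix i assume "i \<notin> {..<n}" then show "y i = undefined" using y by (auto simp: PiE_dflt_def)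
  qed
qed

lemma pr_prod_marg:
  assumes "i < n"
  shows "pr (prod_marg n \<nu>) i \<omega> = pr \<nu> i \<omega>"
proof -
  have "pr (prod_marg n \<nu>) i \<omega> = measure_pmf.prob (map_pmf (\<lambda>f. f i) (prod_marg n \<nu>)) {\<omega>}"
    unfolding pr_def by (simp add: vimage_def)
  also have "map_pmf (\<lambda>f. f i) (prod_marg n \<nu>) = map_pmf (\<lambda>\<tau>. \<tau> i) \<nu>"
    unfolding prod_marg_def using assms by (subst Pi_pmf_component) auto
  finally show ?thesis unfolding pr_def by (simp add: vimage_def)
qed

lemma pr2_prod_marg:
  assumes fin: "finite (set_pmf \<nu>)" and ij: "i < n" "j < n" "i \<noteq> j"
  shows "pr2 (prod_marg n \<nu>) i j \<omega> = pr \<nu> i \<omega> * pr \<nu> j \<omega>"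
proof -
  define f where "f = (\<lambda>k (v::nat). if k = i \<or> k = j then (if v = \<omega> then 1 else 0) else (1::real))"
  have prodeq: "(\<Prod>k\<in>{..<n}. f k (y k)) = f i (y i) * f j (y j)" for y
  proof -
    have "(\<Prod>k\<in>{..<n}. f k (y k)) = (\<Prod>k\<in>{i,j}. f k (y k))"
      by (rule prod.mono_neutral_right) (use ij in \<open>auto simp: f_def\<close>)
    then show ?thesis using ij by simp
  qed
  have "pr2 (prod_marg n \<nu>) i j \<omega> = measure_pmf.expectation (prod_marg n \<nu>) (\<lambda>y. \<Prod>k\<in>{..<n}. f k (y k))"
    unfolding pr2_def prodeq by (subst exp_ind[symmetric]) (auto simp: f_def intro!: Bochner_Integration.integral_cong)
  also have "\<dots> = (\<Prod>k\<in>{..<n}. measure_pmf.expectation (map_pmf (\<lambda>\<tau>. \<tau> k) \<nu>) (f k))"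
    unfolding prod_marg_def
    by (rule expectation_prod_Pi_pmf) (auto simp: f_def intro!: integrable_measure_pmf_finite fin)
  also have "\<dots> = (\<Prod>k\<in>{i,j}. measure_pmf.expectation (map_pmf (\<lambda>\<tau>. \<tau> k) \<nu>) (f k))"
    by (rule prod.mono_neutral_right) (use ij in \<open>auto simp: f_def\<close>)
  also have "\<dots> = pr \<nu> i \<omega> * pr \<nu> j \<omega>"
    using ij by (simp add: f_def pr_def exp_ind[symmetric])
  finally show ?thesis .
qed



definition Af :: "nat set \<Rightarrow> nat \<Rightarrow> (nat \<Rightarrow> nat) \<Rightarrow> real" where
  "Af I \<omega> x = (\<Sum>i\<in>I. if x i = \<omega> then 1 else 0)"

lemma Zf_Af: "Zf I \<omega> p = Af I \<omega> (fst p) - Af I \<omega> (snd p)"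
  unfolding Zf_def Af_def by (simp add: sum_subtractf)

lemma exp_Af:
  assumes "finite (set_pmf M)"
  shows "measure_pmf.expectation M (Af I \<omega>) = (\<Sum>i\<in>I. pr M i \<omega>)"
  unfolding Af_def pr_def
  by (subst Bochner_Integration.integral_sum) (auto simp: exp_ind intro!: integrable_measure_pmf_finite assms)

lemma exp_Af2:
  assumes "finite (set_pmf M)"
  shows "measure_pmf.expectation M (\<lambda>x. (Af I \<omega> x)\<^sup>2) = (\<Sum>i\<in>I. \<Sum>j\<in>I. pr2 M i j \<omega>)"
proof -
  have "(\<lambda>x. (Af I \<omega> x)\<^sup>2) = (\<lambda>x. \<Sum>i\<in>I. \<Sum>j\<in>I. if x i = \<omega> \<and> x j = \<omega> then 1 else 0)"
    unfolding Af_def power2_eq_square by (auto simp: sum_product intro!: sum.cong)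
  then show ?thesis unfolding pr2_def
    by (simp add: Bochner_Integration.integral_sum integrable_measure_pmf_finite assms exp_ind)
qed

lemma EZ2_pair:
  assumes fin: "finite \<Omega>" and supp: "set_pmf \<nu> \<subseteq> configs n \<Omega>" and I: "I \<subseteq> {..<n}"
  shows "measure_pmf.expectation (pair_pmf \<nu> (prod_marg n \<nu>)) (\<lambda>p. (Zf I \<omega> p)\<^sup>2) =
    (\<Sum>i\<in>I. \<Sum>j\<in>I. cv \<nu> i j \<omega>) + (\<Sum>i\<in>I. pr \<nu> i \<omega> - (pr \<nu> i \<omega>)\<^sup>2)"
proof -
  define \<rho> where "\<rho> = prod_marg n \<nu>"
  have f1: "finite (set_pmf \<nu>)" by (rule fin_supp_configs[OF fin supp])
  have f2: "finite (set_pmf \<rho>)" unfolding \<rho>_def by (rule fin_supp_configs[OF fin prod_marg_supp[OF fin supp]])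
  have f3: "finite (set_pmf (pair_pmf \<nu> \<rho>))" using f1 f2 by simp
  have int: "\<And>g::_\<Rightarrow>real. integrable (pair_pmf \<nu> \<rho>) g" by (rule integrable_measure_pmf_finite[OF f3])
  have "(\<lambda>p. (Zf I \<omega> p)\<^sup>2) = (\<lambda>p. (Af I \<omega> (fst p))\<^sup>2 - 2 * (Af I \<omega> (fst p) * Af I \<omega> (snd p)) + (Af I \<omega> (snd p))\<^sup>2)"
    unfolding Zf_Af by (auto simp: power2_eq_square algebra_simps)
  then have "measure_pmf.expectation (pair_pmf \<nu> \<rho>) (\<lambda>p. (Zf I \<omega> p)\<^sup>2) =
     measure_pmf.expectation (pair_pmf \<nu> \<rho>) (\<lambda>p. (Af I \<omega> (fst p))\<^sup>2)
     - 2 * measure_pmf.expectation (pair_pmf \<nu> \<rho>) (\<lambda>p. Af I \<omega> (fst p) * Af I \<omega> (snd p))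
     + measure_pmf.expectation (pair_pmf \<nu> \<rho>) (\<lambda>p. (Af I \<omega> (snd p))\<^sup>2)"
    using int by simp
  also have "\<dots> = (\<Sum>i\<in>I. \<Sum>j\<in>I. pr2 \<nu> i j \<omega>) - 2 * ((\<Sum>i\<in>I. pr \<nu> i \<omega>) * (\<Sum>i\<in>I. pr \<rho> i \<omega>))
      + (\<Sum>i\<in>I. \<Sum>j\<in>I. pr2 \<rho> i j \<omega>)"
    using f1 f2 expectation_pair_pmf_fst[where f="\<lambda>x. (Af I \<omega> x)\<^sup>2" and p=\<nu> and q=\<rho>]
      expectation_pair_pmf_snd[where f="\<lambda>x. (Af I \<omega> x)\<^sup>2" and p=\<nu> and q=\<rho>]
    by (simp add: exp_pair_prod exp_Af exp_Af2)
  also have "(\<Sum>i\<in>I. pr \<rho> i \<omega>) = (\<Sum>i\<in>I. pr \<nu> i \<omega>)"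
    unfolding \<rho>_def using I by (intro sum.cong) (auto simp: pr_prod_marg)
  also have "(\<Sum>i\<in>I. \<Sum>j\<in>I. pr2 \<rho> i j \<omega>) = (\<Sum>i\<in>I. \<Sum>j\<in>I. pr \<nu> i \<omega> * pr \<nu> j \<omega> + (if i = j then pr \<nu> i \<omega> - (pr \<nu> i \<omega>)\<^sup>2 else 0))"
  proof (intro sum.cong refl)
    fix i j assume "i \<in> I" "j \<in> I"
    then have ij: "i < n" "j < n" using I by auto
    show "pr2 \<rho> i j \<omega> = pr \<nu> i \<omega> * pr \<nu> j \<omega> + (if i = j then pr \<nu> i \<omega> - (pr \<nu> i \<omega>)\<^sup>2 else 0)"
    proof (cases "i = j")
      case True
      then show ?thesis unfolding \<rho>_def using ij pr_prod_marg[of i n \<nu> \<omega>] by (simp add: pr2_def pr_def power2_eq_square)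
    next
      case False
      then show ?thesis unfolding \<rho>_def using ij f1 by (simp add: pr2_prod_marg)
    qed
  qed
  also have "\<dots> = (\<Sum>i\<in>I. \<Sum>j\<in>I. pr \<nu> i \<omega> * pr \<nu> j \<omega>) + (\<Sum>i\<in>I. pr \<nu> i \<omega> - (pr \<nu> i \<omega>)\<^sup>2)"
    using I finite_subset[OF I] by (simp only: sum.distrib) (simp add: sum.delta sum.delta')
  finally show ?thesis unfolding \<rho>_def cv_def
    by (simp add: sum_subtractf sum_product algebra_simps)
qed



lemma cut_value_nonneg:
  assumes fin: "finite \<Omega>" and ne: "\<Omega> \<noteq> {}"
  shows "0 \<le> cut_value n \<Omega> \<gamma>"
proof -
  define C where "C = configs n \<Omega>"
  have finC: "finite C" using fin by (simp add: C_def finite_configs)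
  define S where "S = {\<bar>\<Sum>i\<in>I. \<Sum>p\<in>B. pmf \<gamma> p *
        ((if fst p i = \<omega> then 1 else 0) - (if snd p i = \<omega> then 1 else 0))\<bar> | I B \<omega>.
        I \<subseteq> {..<n} \<and> B \<subseteq> configs n \<Omega> \<times> configs n \<Omega> \<and> \<omega> \<in> \<Omega>}"
  have cv: "cut_value n \<Omega> \<gamma> = Max S" unfolding cut_value_def S_def ..
  have Ssub: "S \<subseteq> (\<lambda>(I,B,\<omega>). \<bar>\<Sum>i\<in>I. \<Sum>p\<in>B. pmf \<gamma> p *
        ((if fst p i = \<omega> then 1 else 0) - (if snd p i = \<omega> then 1 else 0))\<bar>) ` (Pow {..<n} \<times> Pow (C \<times> C) \<times> \<Omega>)"
  proof
    fix s assume "s \<in> S"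
    then obtain I B \<omega> where "s = \<bar>\<Sum>i\<in>I. \<Sum>p\<in>B. pmf \<gamma> p *
        ((if fst p i = \<omega> then 1 else 0) - (if snd p i = \<omega> then 1 else 0))\<bar>"
      "I \<subseteq> {..<n}" "B \<subseteq> C \<times> C" "\<omega> \<in> \<Omega>" unfolding S_def C_def by blast
    then show "s \<in> (\<lambda>(I,B,\<omega>). \<bar>\<Sum>i\<in>I. \<Sum>p\<in>B. pmf \<gamma> p *
        ((if fst p i = \<omega> then 1 else 0) - (if snd p i = \<omega> then 1 else 0))\<bar>) ` (Pow {..<n} \<times> Pow (C \<times> C) \<times> \<Omega>)"
      by (intro image_eqI[where x="(I,B,\<omega>)"]) auto
  qed
  have finS: "finite S" by (rule finite_subset[OF Ssub]) (use finC fin in auto)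
  obtain \<omega>0 where \<omega>0: "\<omega>0 \<in> \<Omega>" using ne by auto
  have "0 \<le> \<bar>\<Sum>i\<in>{}. \<Sum>p\<in>{}. pmf \<gamma> p *
        ((if fst p i = \<omega>0 then 1 else 0) - (if snd p i = \<omega>0 then 1 else 0))\<bar>" by simp
  moreover have "\<bar>\<Sum>i\<in>{}. \<Sum>p\<in>{}. pmf \<gamma> p *
        ((if fst p i = \<omega>0 then 1 else 0) - (if snd p i = \<omega>0 then 1 else 0))\<bar> \<in> S"
    unfolding S_def using \<omega>0 by blast
  ultimately show "0 \<le> cut_value n \<Omega> \<gamma>" unfolding cv using finS by (meson Max_ge order_trans)
qed

lemma cut_dist_le:
  assumes fin: "finite \<Omega>" and ne: "\<Omega> \<noteq> {}" and cpl: "\<gamma> \<in> couplings \<mu> \<nu>"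
    and supp: "set_pmf \<gamma> \<subseteq> configs n \<Omega> \<times> configs n \<Omega>"
    and bnd: "\<And>I \<omega>. I \<subseteq> {..<n} \<Longrightarrow> \<omega> \<in> \<Omega> \<Longrightarrow> measure_pmf.expectation \<gamma> (\<lambda>p. (Zf I \<omega> p)\<^sup>2) \<le> b"
  shows "cut_dist n \<Omega> \<mu> \<nu> \<le> (1 / real n) * sqrt b"
proof -
  have "(INF \<gamma> \<in> couplings \<mu> \<nu>. cut_value n \<Omega> \<gamma>) \<le> cut_value n \<Omega> \<gamma>"
    by (rule cINF_lower[OF _ cpl]) (auto intro!: bdd_belowI[where m=0] cut_value_nonneg fin ne)
  also have "\<dots> \<le> sqrt b" by (rule cut_value_le(1)[OF fin ne supp bnd])
  finally show ?thesis unfolding cut_dist_def by (simp add: divide_right_mono)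
qed

lemma pr_bounds: "0 \<le> pr \<nu> i \<omega>" "pr \<nu> i \<omega> \<le> 1"
  unfolding pr_def by auto

lemma EZ2_bound:
  assumes fin: "finite \<Omega>" and supp: "set_pmf \<nu> \<subseteq> configs n \<Omega>" and I: "I \<subseteq> {..<n}" and \<omega>: "\<omega> \<in> \<Omega>"
  shows "measure_pmf.expectation (pair_pmf \<nu> (prod_marg n \<nu>)) (\<lambda>p. (Zf I \<omega> p)\<^sup>2) \<le>
    real n + real n * sqrt (Qs n \<Omega> \<nu>)"
proof -
  have finI: "finite I" using I finite_subset by blast
  define K where "K = {..<n} \<times> {..<n}"
  have "(\<Sum>i\<in>I. pr \<nu> i \<omega> - (pr \<nu> i \<omega>)\<^sup>2) \<le> (\<Sum>i\<in>I. 1)"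
  proof (intro sum_mono)
    fix i have "0 \<le> pr \<nu> i \<omega> * pr \<nu> i \<omega>" by simp
    then show "pr \<nu> i \<omega> - (pr \<nu> i \<omega>)\<^sup>2 \<le> 1" using pr_bounds(2)[of \<nu> i \<omega>] unfolding power2_eq_square by linarith
  qed
  also have "\<dots> = real (card I)" by simp
  also have "\<dots> \<le> real n" using card_mono[OF _ I] by simp
  finally have A: "(\<Sum>i\<in>I. pr \<nu> i \<omega> - (pr \<nu> i \<omega>)\<^sup>2) \<le> real n" .
  have "(\<Sum>i\<in>I. \<Sum>j\<in>I. cv \<nu> i j \<omega>) = (\<Sum>p\<in>I\<times>I. cv \<nu> (fst p) (snd p) \<omega>)"
    by (simp add: sum.cartesian_product case_prod_unfold)
  also have "\<dots> \<le> (\<Sum>p\<in>I\<times>I. \<bar>cv \<nu> (fst p) (snd p) \<omega>\<bar>)" by (intro sum_mono) auto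
  also have "\<dots> \<le> (\<Sum>p\<in>K. \<bar>cv \<nu> (fst p) (snd p) \<omega>\<bar>)"
    by (rule sum_mono2) (use I in \<open>auto simp: K_def\<close>)
  also have "\<dots> \<le> real n * sqrt (Qs n \<Omega> \<nu>)"
  proof -
    have "(\<Sum>p\<in>K. \<bar>cv \<nu> (fst p) (snd p) \<omega>\<bar>)\<^sup>2 \<le> (\<Sum>p\<in>K. (\<bar>cv \<nu> (fst p) (snd p) \<omega>\<bar>)\<^sup>2) * card K"
      by (rule sum_squared_le_sum_of_squares)
    also have "(\<Sum>p\<in>K. (\<bar>cv \<nu> (fst p) (snd p) \<omega>\<bar>)\<^sup>2) = (\<Sum>i<n. \<Sum>j<n. (cv \<nu> i j \<omega>)\<^sup>2)"
      by (simp add: K_def sum.cartesian_product case_prod_unfold)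
    also have "\<dots> \<le> Qs n \<Omega> \<nu>"
      unfolding Qs_def by (intro sum_mono member_le_sum) (use \<omega> fin in auto)
    finally have "(\<Sum>p\<in>K. \<bar>cv \<nu> (fst p) (snd p) \<omega>\<bar>)\<^sup>2 \<le> Qs n \<Omega> \<nu> * (real n)\<^sup>2"
      by (simp add: K_def power2_eq_square mult_right_mono)
    then have "(\<Sum>p\<in>K. \<bar>cv \<nu> (fst p) (snd p) \<omega>\<bar>) \<le> sqrt (Qs n \<Omega> \<nu> * (real n)\<^sup>2)"
      by (simp add: real_le_rsqrt)
    also have "\<dots> = real n * sqrt (Qs n \<Omega> \<nu>)" by (simp add: real_sqrt_mult)
    finally show ?thesis .
  qed
  finally have B: "(\<Sum>i\<in>I. \<Sum>j\<in>I. cv \<nu> i j \<omega>) \<le> real n * sqrt (Qs n \<Omega> \<nu>)" .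
  show ?thesis unfolding EZ2_pair[OF fin supp I] using A B by simp
qed

lemma Qs_nonneg: "0 \<le> Qs n \<Omega> \<nu>"
  unfolding Qs_def by (intro sum_nonneg) auto

lemma cut_i:
  assumes fin: "finite \<Omega>" and ne: "\<Omega> \<noteq> {}" and n: "n > 0" and supp: "set_pmf \<nu> \<subseteq> configs n \<Omega>"
  shows "cut_dist n \<Omega> \<nu> (prod_marg n \<nu>) \<le> sqrt (1 / real n + sqrt (Qs n \<Omega> \<nu>) / real n)"
proof -
  have "cut_dist n \<Omega> \<nu> (prod_marg n \<nu>) \<le> (1 / real n) * sqrt (real n + real n * sqrt (Qs n \<Omega> \<nu>))"
  proof (rule cut_dist_le[OF fin ne])
    show "pair_pmf \<nu> (prod_marg n \<nu>) \<in> couplings \<nu> (prod_marg n \<nu>)"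
      by (simp add: couplings_def map_fst_pair_pmf map_snd_pair_pmf)
    show "set_pmf (pair_pmf \<nu> (prod_marg n \<nu>)) \<subseteq> configs n \<Omega> \<times> configs n \<Omega>"
      using supp prod_marg_supp[OF fin supp] by auto
  qed (rule EZ2_bound[OF fin supp])
  also have "(1 / real n) * sqrt (real n + real n * sqrt (Qs n \<Omega> \<nu>)) = sqrt (1 / real n + sqrt (Qs n \<Omega> \<nu>) / real n)"
  proof -
    have "(1 / real n) = sqrt (1 / (real n)\<^sup>2)" using n by (simp add: real_sqrt_divide)
    then have "(1 / real n) * sqrt (real n + real n * sqrt (Qs n \<Omega> \<nu>)) =
        sqrt ((real n + real n * sqrt (Qs n \<Omega> \<nu>)) / (real n)\<^sup>2)" by (simp add: real_sqrt_mult[symmetric])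
    also have "(real n + real n * sqrt (Qs n \<Omega> \<nu>)) / (real n)\<^sup>2 = 1 / real n + sqrt (Qs n \<Omega> \<nu>) / real n"
      using n by (simp add: power2_eq_square field_simps)
    finally show ?thesis .
  qed
  finally show ?thesis .
qed



lemma marg_supp:
  assumes "\<sigma> \<in> set_pmf (marg \<mu> I)"
  obtains \<tau> where "\<tau> \<in> set_pmf \<mu>" "\<sigma> = restrict \<tau> I"
  using assms unfolding marg_def by auto

lemma restrict_in_pinned:
  assumes "\<tau> \<in> configs n \<Omega>"
  shows "\<tau> \<in> pinned n \<Omega> I (restrict \<tau> I)"
  using assms unfolding pinned_def by auto

lemma marg_pos:
  assumes supp: "set_pmf \<mu> \<subseteq> configs n \<Omega>" and \<sigma>: "\<sigma> \<in> set_pmf (marg \<mu> I)"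
  shows "measure_pmf.prob \<mu> (pinned n \<Omega> I \<sigma>) > 0"
proof -
  obtain \<tau> where \<tau>: "\<tau> \<in> set_pmf \<mu>" "\<sigma> = restrict \<tau> I" using \<sigma> by (rule marg_supp)
  show ?thesis using \<tau> supp restrict_in_pinned by (intro measure_pmf_posI) blast+
qed

lemma cond_dist_eq:
  assumes supp: "set_pmf \<mu> \<subseteq> configs n \<Omega>" and \<sigma>: "\<sigma> \<in> set_pmf (marg \<mu> I)"
  shows "cond_dist n \<Omega> \<mu> I \<sigma> = cond_pmf \<mu> (pinned n \<Omega> I \<sigma>)"
  using marg_pos[OF assms] unfolding cond_dist_def by simp

lemma cond_dist_supp:
  assumes supp: "set_pmf \<mu> \<subseteq> configs n \<Omega>" and \<sigma>: "\<sigma> \<in> set_pmf (marg \<mu> I)"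
  shows "set_pmf (cond_dist n \<Omega> \<mu> I \<sigma>) \<subseteq> configs n \<Omega>"
proof -
  have ne: "set_pmf \<mu> \<inter> pinned n \<Omega> I \<sigma> \<noteq> {}"
    using marg_pos[OF assms] measure_measure_pmf_not_zero
    by (metis measure_Int_set_pmf Int_commute measure_empty less_irrefl)
  show ?thesis unfolding cond_dist_eq[OF assms] using supp ne by (simp add: set_cond_pmf) blast
qed

lemma bind_cond_dist:
  assumes supp: "set_pmf \<mu> \<subseteq> configs n \<Omega>"
  shows "bind_pmf (marg \<mu> I) (\<lambda>\<sigma>. cond_dist n \<Omega> \<mu> I \<sigma>) = \<mu>"
proof -
  have "bind_pmf (marg \<mu> I) (\<lambda>\<sigma>. cond_dist n \<Omega> \<mu> I \<sigma>) =
        bind_pmf (marg \<mu> I) (\<lambda>\<sigma>. cond_pmf \<mu> {y. y \<in> pinned n \<Omega> I \<sigma>})"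
    by (intro bind_pmf_cong refl) (simp add: cond_dist_eq[OF supp])
  also have "\<dots> = \<mu>"
  proof (rule bind_cond_pmf_cancel)
    fix \<sigma> assume "\<sigma> \<in> set_pmf (marg \<mu> I)"
    then obtain \<tau> where \<tau>: "\<tau> \<in> set_pmf \<mu>" "\<sigma> = restrict \<tau> I" by (rule marg_supp)
    then show "set_pmf \<mu> \<inter> {y. y \<in> pinned n \<Omega> I \<sigma>} \<noteq> {}"
      using supp restrict_in_pinned by blast
  next
    fix y assume y: "y \<in> set_pmf \<mu>"
    then have "restrict y I \<in> set_pmf (marg \<mu> I)" unfolding marg_def by auto
    then show "set_pmf (marg \<mu> I) \<inter> {\<sigma>. y \<in> pinned n \<Omega> I \<sigma>} \<noteq> {}"
      using y supp restrict_in_pinned by blast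
  next
    fix \<sigma> y assume \<sigma>: "\<sigma> \<in> set_pmf (marg \<mu> I)" and y: "y \<in> set_pmf \<mu>" and R: "y \<in> pinned n \<Omega> I \<sigma>"
    have yC: "y \<in> configs n \<Omega>" using y supp by blast
    have "measure_pmf.prob (marg \<mu> I) {\<sigma>. y \<in> pinned n \<Omega> I \<sigma>} =
          measure_pmf.prob \<mu> {\<tau>. y \<in> pinned n \<Omega> I (restrict \<tau> I)}"
      unfolding marg_def by (simp add: vimage_def)
    also have "{\<tau>. y \<in> pinned n \<Omega> I (restrict \<tau> I)} = {\<tau>. \<forall>i\<in>I. \<tau> i = y i}"
      using yC unfolding pinned_def by auto
    also have "measure_pmf.prob \<mu> {\<tau>. \<forall>i\<in>I. \<tau> i = y i} = measure_pmf.prob \<mu> (pinned n \<Omega> I \<sigma>)"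
    proof -
      have "{\<tau>. \<forall>i\<in>I. \<tau> i = y i} \<inter> set_pmf \<mu> = pinned n \<Omega> I \<sigma> \<inter> set_pmf \<mu>"
        using R supp unfolding pinned_def by auto
      then show ?thesis by (metis measure_Int_set_pmf)
    qed
    finally show "measure_pmf.prob \<mu> {y. y \<in> pinned n \<Omega> I \<sigma>} =
          measure_pmf.prob (marg \<mu> I) {\<sigma>. y \<in> pinned n \<Omega> I \<sigma>}" by simp
  qed
  finally show ?thesis .
qed

lemma marg_fin:
  assumes fin: "finite \<Omega>" and supp: "set_pmf \<mu> \<subseteq> configs n \<Omega>"
  shows "finite (set_pmf (marg \<mu> I))"
  unfolding marg_def using fin_supp_configs[OF fin supp] by simp

lemma cut_ii:
  assumes fin: "finite \<Omega>" and ne: "\<Omega> \<noteq> {}" and n: "n > 0" and supp: "set_pmf \<mu> \<subseteq> configs n \<Omega>"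
  shows "cut_dist n \<Omega> \<mu> (bar_mix n \<Omega> \<mu> I) \<le>
     sqrt (1 / real n + measure_pmf.expectation (marg \<mu> I) (\<lambda>\<sigma>. sqrt (Qs n \<Omega> (cond_dist n \<Omega> \<mu> I \<sigma>))) / real n)"
proof -
  define cd where "cd = (\<lambda>\<sigma>. cond_dist n \<Omega> \<mu> I \<sigma>)"
  define M where "M = marg \<mu> I"
  define \<gamma> where "\<gamma> = bind_pmf M (\<lambda>\<sigma>. pair_pmf (cd \<sigma>) (prod_marg n (cd \<sigma>)))"
  have finM: "finite (set_pmf M)" unfolding M_def by (rule marg_fin[OF fin supp])
  have cds: "\<And>\<sigma>. \<sigma> \<in> set_pmf M \<Longrightarrow> set_pmf (cd \<sigma>) \<subseteq> configs n \<Omega>"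
    unfolding cd_def M_def by (rule cond_dist_supp[OF supp])
  have E: "measure_pmf.expectation M (\<lambda>\<sigma>. sqrt (Qs n \<Omega> (cd \<sigma>))) =
      (\<Sum>\<sigma>\<in>set_pmf M. pmf M \<sigma> * sqrt (Qs n \<Omega> (cd \<sigma>)))"
    by (subst integral_measure_pmf_real[OF finM]) (auto simp: mult.commute)
  let ?b = "real n + real n * measure_pmf.expectation M (\<lambda>\<sigma>. sqrt (Qs n \<Omega> (cd \<sigma>)))"
  have "cut_dist n \<Omega> \<mu> (bar_mix n \<Omega> \<mu> I) \<le> (1 / real n) * sqrt ?b"
  proof (rule cut_dist_le[OF fin ne])
    have "map_pmf fst \<gamma> = bind_pmf M cd"
      unfolding \<gamma>_def map_bind_pmf by (simp add: map_fst_pair_pmf)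
    also have "\<dots> = \<mu>" unfolding M_def cd_def by (rule bind_cond_dist[OF supp])
    finally have 1: "map_pmf fst \<gamma> = \<mu>" .
    have 2: "map_pmf snd \<gamma> = bar_mix n \<Omega> \<mu> I"
      unfolding \<gamma>_def map_bind_pmf bar_mix_def M_def cd_def by (simp add: map_snd_pair_pmf)
    show "\<gamma> \<in> couplings \<mu> (bar_mix n \<Omega> \<mu> I)" using 1 2 by (simp add: couplings_def)
    show "set_pmf \<gamma> \<subseteq> configs n \<Omega> \<times> configs n \<Omega>"
      unfolding \<gamma>_def using cds prod_marg_supp[OF fin cds] by auto
  next
    fix J \<omega> assume J: "J \<subseteq> {..<n}" and \<omega>: "\<omega> \<in> \<Omega>"
    have "measure_pmf.expectation \<gamma> (\<lambda>p. (Zf J \<omega> p)\<^sup>2) =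
        (\<Sum>\<sigma>\<in>set_pmf M. pmf M \<sigma> *\<^sub>R measure_pmf.expectation (pair_pmf (cd \<sigma>) (prod_marg n (cd \<sigma>))) (\<lambda>p. (Zf J \<omega> p)\<^sup>2))"
      unfolding \<gamma>_def
    proof (rule pmf_expectation_bind[OF finM])
      fix \<sigma> assume "\<sigma> \<in> set_pmf M"
      then show "finite (set_pmf (pair_pmf (cd \<sigma>) (prod_marg n (cd \<sigma>))))"
        using fin_supp_configs[OF fin cds] fin_supp_configs[OF fin prod_marg_supp[OF fin cds]] by simp
    qed simp
    also have "\<dots> \<le> (\<Sum>\<sigma>\<in>set_pmf M. pmf M \<sigma> * (real n + real n * sqrt (Qs n \<Omega> (cd \<sigma>))))"
      by (intro sum_mono) (auto intro!: mult_left_mono EZ2_bound[OF fin cds J \<omega>])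
    also have "\<dots> = real n * (\<Sum>\<sigma>\<in>set_pmf M. pmf M \<sigma>) + real n * (\<Sum>\<sigma>\<in>set_pmf M. pmf M \<sigma> * sqrt (Qs n \<Omega> (cd \<sigma>)))"
      by (simp add: algebra_simps sum.distrib sum_distrib_left)
    also have "(\<Sum>\<sigma>\<in>set_pmf M. pmf M \<sigma>) = 1" using finM by (simp add: sum_pmf_eq_1)
    finally show "measure_pmf.expectation \<gamma> (\<lambda>p. (Zf J \<omega> p)\<^sup>2) \<le> ?b" unfolding E by simp
  qed
  also have "(1 / real n) * sqrt ?b = sqrt (1 / real n + measure_pmf.expectation M (\<lambda>\<sigma>. sqrt (Qs n \<Omega> (cd \<sigma>))) / real n)"
  proof -
    have "(1 / real n) = sqrt (1 / (real n)\<^sup>2)" using n by (simp add: real_sqrt_divide)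
    then have "(1 / real n) * sqrt ?b = sqrt (?b / (real n)\<^sup>2)" by (simp add: real_sqrt_mult[symmetric])
    also have "?b / (real n)\<^sup>2 = 1 / real n + measure_pmf.expectation M (\<lambda>\<sigma>. sqrt (Qs n \<Omega> (cd \<sigma>))) / real n"
      using n by (simp add: power2_eq_square field_simps)
    finally show ?thesis .
  qed
  finally show ?thesis unfolding M_def cd_def .
qed



definition mw :: "('x \<Rightarrow> real) \<Rightarrow> 'x set \<Rightarrow> real" where
  "mw w K = (\<Sum>y\<in>K. w y)"

lemma tower:
  fixes w Z :: "'x \<Rightarrow> real"
  assumes finD: "finite D" and nn: "\<And>x. x \<in> D \<Longrightarrow> 0 \<le> w x"
    and K1: "\<And>x. x \<in> D \<Longrightarrow> x \<in> Kf x" and K2: "\<And>x. x \<in> D \<Longrightarrow> Kf x \<subseteq> D"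
    and K3: "\<And>x y. x \<in> D \<Longrightarrow> y \<in> Kf x \<Longrightarrow> Kf y = Kf x"
  shows "(\<Sum>x\<in>D. w x * Z x) = (\<Sum>x\<in>D. w x * ((\<Sum>y\<in>Kf x. w y * Z y) / mw w (Kf x)))"
proof -
  have sym: "y \<in> Kf x \<longleftrightarrow> x \<in> Kf y" if "x \<in> D" "y \<in> D" for x y
  proof
    assume "y \<in> Kf x" then have "Kf y = Kf x" using K3 that by blast
    then show "x \<in> Kf y" using K1[OF \<open>x \<in> D\<close>] by simp
  next
    assume "x \<in> Kf y" then have "Kf x = Kf y" using K3 that by blast
    then show "y \<in> Kf x" using K1[OF \<open>y \<in> D\<close>] by simp
  qed
  have "(\<Sum>x\<in>D. w x * ((\<Sum>y\<in>Kf x. w y * Z y) / mw w (Kf x))) =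
        (\<Sum>x\<in>D. \<Sum>y\<in>D. if y \<in> Kf x then w x * w y * Z y / mw w (Kf x) else 0)"
  proof (rule sum.cong[OF refl])
    fix x assume x: "x \<in> D"
    have "Kf x = D \<inter> Kf x" using K2[OF x] by blast
    then have "(\<Sum>y\<in>Kf x. w y * Z y) = (\<Sum>y\<in>D \<inter> Kf x. w y * Z y)" by simp
    also have "\<dots> = (\<Sum>y\<in>D. if y \<in> Kf x then w y * Z y else 0)"
      by (rule sum.inter_restrict[OF finD])
    finally have eqS: "(\<Sum>y\<in>Kf x. w y * Z y) = (\<Sum>y\<in>D. if y \<in> Kf x then w y * Z y else 0)" .
    then show "w x * ((\<Sum>y\<in>Kf x. w y * Z y) / mw w (Kf x)) =
        (\<Sum>y\<in>D. if y \<in> Kf x then w x * w y * Z y / mw w (Kf x) else 0)"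
    proof -
      have "w x * ((\<Sum>y\<in>D. if y \<in> Kf x then w y * Z y else 0) / mw w (Kf x)) =
           (\<Sum>y\<in>D. w x * (if y \<in> Kf x then w y * Z y else 0) / mw w (Kf x))"
        by (simp only: sum_distrib_left sum_divide_distrib times_divide_eq_right)
      also have "\<dots> = (\<Sum>y\<in>D. if y \<in> Kf x then w x * w y * Z y / mw w (Kf x) else 0)"
        by (rule sum.cong) (simp_all add: mult.assoc)
      finally show ?thesis using eqS by simp
    qed
  qed
  also have "\<dots> = (\<Sum>y\<in>D. \<Sum>x\<in>D. if y \<in> Kf x then w x * w y * Z y / mw w (Kf x) else 0)"
    by (rule sum.swap)
  also have "\<dots> = (\<Sum>y\<in>D. w y * Z y * (\<Sum>x\<in>D. if x \<in> Kf y then w x else 0) / mw w (Kf y))"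
  proof (rule sum.cong[OF refl])
    fix y assume y: "y \<in> D"
    have "(\<Sum>x\<in>D. if y \<in> Kf x then w x * w y * Z y / mw w (Kf x) else 0) =
          (\<Sum>x\<in>D. (if x \<in> Kf y then w x else 0) * (w y * Z y / mw w (Kf y)))"
    proof (rule sum.cong[OF refl])
      fix x assume x: "x \<in> D"
      show "(if y \<in> Kf x then w x * w y * Z y / mw w (Kf x) else 0) =
          (if x \<in> Kf y then w x else 0) * (w y * Z y / mw w (Kf y))"
        using sym[OF x y] K3[OF x] by auto
    qed
    also have "\<dots> = w y * Z y * (\<Sum>x\<in>D. if x \<in> Kf y then w x else 0) / mw w (Kf y)"
      by (simp only: sum_distrib_right[symmetric]) (simp add: mult.commute)
    finally show "(\<Sum>x\<in>D. if y \<in> Kf x then w x * w y * Z y / mw w (Kf x) else 0) =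
      w y * Z y * (\<Sum>x\<in>D. if x \<in> Kf y then w x else 0) / mw w (Kf y)" .
  qed
  also have "\<dots> = (\<Sum>y\<in>D. w y * Z y)"
  proof (rule sum.cong[OF refl])
    fix y assume y: "y \<in> D"
    have "Kf y = D \<inter> Kf y" using K2[OF y] by blast
    then have e: "(\<Sum>x\<in>D. if x \<in> Kf y then w x else 0) = mw w (Kf y)"
      unfolding mw_def using sum.inter_restrict[OF finD, of w "Kf y"] by simp
    have fK: "finite (Kf y)" using K2[OF y] finD finite_subset by blast
    have "w y \<le> mw w (Kf y)" unfolding mw_def
      by (rule member_le_sum[OF K1[OF y] _ fK]) (use K2[OF y] nn in auto)
    then show "w y * Z y * (\<Sum>x\<in>D. if x \<in> Kf y then w x else 0) / mw w (Kf y) = w y * Z y"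
      unfolding e using nn[OF y] by (cases "mw w (Kf y) = 0") auto
  qed
  finally show ?thesis ..
qed



lemma mw_inter_ind: "finite K \<Longrightarrow> mw w (K \<inter> A) = (\<Sum>x\<in>K. w x * (if x \<in> A then 1 else 0))"
  unfolding mw_def by (simp add: sum.inter_restrict if_distrib cong: if_cong)

lemma local_cs:
  fixes w :: "'x \<Rightarrow> real"
  assumes finK: "finite K" and nn: "\<And>x. x \<in> K \<Longrightarrow> 0 \<le> w x" and pos: "mw w K > 0"
    and K1: "\<And>x. x \<in> K \<Longrightarrow> x \<in> Kf x" and K2: "\<And>x. x \<in> K \<Longrightarrow> Kf x \<subseteq> K"
    and K3: "\<And>x y. x \<in> K \<Longrightarrow> y \<in> Kf x \<Longrightarrow> Kf y = Kf x"
    and Finv: "\<And>x y. x \<in> K \<Longrightarrow> y \<in> Kf x \<Longrightarrow> (y \<in> F \<longleftrightarrow> x \<in> F)"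
  shows "(mw w (K \<inter> (E \<inter> F)) / mw w K - (mw w (K \<inter> E) / mw w K) * (mw w (K \<inter> F) / mw w K))\<^sup>2
     \<le> (\<Sum>x\<in>K. w x * (mw w (Kf x \<inter> E) / mw w (Kf x))\<^sup>2) / mw w K - (mw w (K \<inter> E) / mw w K)\<^sup>2"
proof -
  define m where "m = mw w K"
  define p where "p = mw w (K \<inter> E) / m"
  define q where "q = mw w (K \<inter> F) / m"
  define p' where "p' = (\<lambda>x. mw w (Kf x \<inter> E) / mw w (Kf x))"
  define iE where "iE = (\<lambda>x. if x \<in> E then 1 else 0 :: real)"
  define iF where "iF = (\<lambda>x. if x \<in> F then 1 else 0 :: real)"
  have fKf: "\<And>x. x \<in> K \<Longrightarrow> finite (Kf x)" using K2 finK finite_subset by blast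
  note tw = tower[OF finK nn K1 K2 K3]
  have t1: "(\<Sum>x\<in>K. w x * p' x) = m * p"
  proof -
    have "m * p = (\<Sum>x\<in>K. w x * iE x)" unfolding p_def m_def iE_def using pos finK by (simp add: mw_inter_ind)
    also have "\<dots> = (\<Sum>x\<in>K. w x * ((\<Sum>y\<in>Kf x. w y * iE y) / mw w (Kf x)))" by (rule tw)
    also have "\<dots> = (\<Sum>x\<in>K. w x * p' x)"
      by (intro sum.cong refl) (simp add: p'_def iE_def mw_inter_ind fKf)
    finally show ?thesis ..
  qed
  have t2: "(\<Sum>x\<in>K. w x * (iF x * p' x)) = mw w (K \<inter> (E \<inter> F))"
  proof -
    have "mw w (K \<inter> (E \<inter> F)) = (\<Sum>x\<in>K. w x * (iE x * iF x))"
      unfolding iE_def iF_def using finK by (simp add: mw_inter_ind) (intro sum.cong, auto)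
    also have "\<dots> = (\<Sum>x\<in>K. w x * ((\<Sum>y\<in>Kf x. w y * (iE y * iF y)) / mw w (Kf x)))" by (rule tw)
    also have "\<dots> = (\<Sum>x\<in>K. w x * (iF x * p' x))"
    proof (intro sum.cong refl)
      fix x assume x: "x \<in> K"
      have "(\<Sum>y\<in>Kf x. w y * (iE y * iF y)) = (\<Sum>y\<in>Kf x. iF x * (w y * iE y))"
        by (intro sum.cong refl) (use Finv[OF x] in \<open>auto simp: iF_def\<close>)
      also have "\<dots> = iF x * mw w (Kf x \<inter> E)"
        by (simp add: sum_distrib_left[symmetric] mw_inter_ind fKf[OF x] iE_def)
      finally show "w x * ((\<Sum>y\<in>Kf x. w y * (iE y * iF y)) / mw w (Kf x)) = w x * (iF x * p' x)"
        by (simp add: p'_def)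
    qed
    finally show ?thesis ..
  qed
  have t3: "(\<Sum>x\<in>K. w x * iF x) = m * q" unfolding q_def m_def iF_def using pos finK by (simp add: mw_inter_ind)
  define c where "c = (\<Sum>x\<in>K. w x * iF x * (p' x - p))"
  have c_eq: "c = mw w (K \<inter> (E \<inter> F)) - p * (m * q)"
  proof -
    have "c = (\<Sum>x\<in>K. w x * (iF x * p' x)) - p * (\<Sum>x\<in>K. w x * iF x)"
      unfolding c_def by (simp add: algebra_simps sum_subtractf sum_distrib_left)
    then show ?thesis using t2 t3 by simp
  qed
  define V where "V = (\<Sum>x\<in>K. w x * (p' x - p)\<^sup>2)"
  have V_eq: "V = (\<Sum>x\<in>K. w x * (p' x)\<^sup>2) - m * p\<^sup>2"
  proof -
    have "V = (\<Sum>x\<in>K. w x * (p' x)\<^sup>2) - 2 * p * (\<Sum>x\<in>K. w x * p' x) + p\<^sup>2 * (\<Sum>x\<in>K. w x)"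
      unfolding V_def by (simp add: power2_eq_square algebra_simps sum_subtractf sum.distrib sum_distrib_left)
    then show ?thesis using t1 by (simp add: m_def mw_def power2_eq_square algebra_simps)
  qed
  have "c\<^sup>2 = (\<Sum>x\<in>K. (sqrt (w x) * iF x) * (sqrt (w x) * (p' x - p)))\<^sup>2"
    unfolding c_def by (intro arg_cong[where f="\<lambda>t. t\<^sup>2"] sum.cong refl)
      (use nn in \<open>auto simp: power2_eq_square[symmetric]\<close>)
  also have "\<dots> \<le> (\<Sum>x\<in>K. (sqrt (w x) * iF x)\<^sup>2) * (\<Sum>x\<in>K. (sqrt (w x) * (p' x - p))\<^sup>2)"
    by (rule Cauchy_Schwarz_ineq_sum)
  also have "(\<Sum>x\<in>K. (sqrt (w x) * iF x)\<^sup>2) = m * q"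
    unfolding t3[symmetric] by (intro sum.cong refl) (use nn in \<open>auto simp: iF_def power_mult_distrib\<close>)
  also have "(\<Sum>x\<in>K. (sqrt (w x) * (p' x - p))\<^sup>2) = V"
    unfolding V_def by (intro sum.cong refl) (use nn in \<open>auto simp: power_mult_distrib\<close>)
  finally have cV: "c\<^sup>2 \<le> m * q * V" .
  have V0: "0 \<le> V" unfolding V_def by (intro sum_nonneg) (use nn in auto)
  have q1: "q \<le> 1"
  proof -
    have "mw w (K \<inter> F) \<le> mw w K" unfolding mw_def by (rule sum_mono2) (use finK nn in auto)
    then show ?thesis unfolding q_def m_def using pos by simp
  qed
  have q0: "0 \<le> q" unfolding q_def m_def using pos nn unfolding mw_def by (auto intro!: sum_nonneg divide_nonneg_pos)
  have "(mw w (K \<inter> (E \<inter> F)) / m - p * q)\<^sup>2 = c\<^sup>2 / m\<^sup>2"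
    unfolding c_eq using pos by (simp add: m_def power2_eq_square field_simps)
  also have "\<dots> \<le> m * q * V / m\<^sup>2" using cV pos by (simp add: m_def divide_right_mono)
  also have "\<dots> \<le> m * V / m\<^sup>2"
  proof -
    have "q * V \<le> 1 * V" using q1 V0 by (rule mult_right_mono)
    then have "m * q * V \<le> m * V" using pos by (simp add: m_def mult.assoc)
    then show ?thesis by (simp add: divide_right_mono)
  qed
  also have "\<dots> = (\<Sum>x\<in>K. w x * (p' x)\<^sup>2) / m - p\<^sup>2"
    unfolding V_eq using pos by (simp add: m_def power2_eq_square field_simps)
  finally show ?thesis unfolding m_def p_def q_def p'_def .
qed



definition Kc :: "nat \<Rightarrow> nat set \<Rightarrow> nat set \<Rightarrow> (nat \<Rightarrow> nat) \<Rightarrow> (nat \<Rightarrow> nat) set" where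
  "Kc n \<Omega> S \<tau> = {x \<in> configs n \<Omega>. \<forall>i\<in>S. x i = \<tau> i}"

definition cpS :: "(nat \<Rightarrow> nat) pmf \<Rightarrow> nat \<Rightarrow> nat set \<Rightarrow> nat set \<Rightarrow> (nat \<Rightarrow> nat) \<Rightarrow> (nat \<Rightarrow> nat) set \<Rightarrow> real" where
  "cpS \<mu> n \<Omega> S \<tau> A = mw (pmf \<mu>) (Kc n \<Omega> S \<tau> \<inter> A) / mw (pmf \<mu>) (Kc n \<Omega> S \<tau>)"

definition pot :: "(nat \<Rightarrow> nat) pmf \<Rightarrow> nat \<Rightarrow> nat set \<Rightarrow> nat set \<Rightarrow> real" where
  "pot \<mu> n \<Omega> S = (\<Sum>\<tau>\<in>configs n \<Omega>. pmf \<mu> \<tau> * (\<Sum>i<n. \<Sum>\<omega>\<in>\<Omega>. (cpS \<mu> n \<Omega> S \<tau> {x. x i = \<omega>})\<^sup>2))"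

definition covs :: "(nat \<Rightarrow> nat) pmf \<Rightarrow> nat \<Rightarrow> nat set \<Rightarrow> nat set \<Rightarrow> (nat \<Rightarrow> nat) \<Rightarrow> nat \<Rightarrow> nat \<Rightarrow> nat \<Rightarrow> real" where
  "covs \<mu> n \<Omega> S \<tau> i j \<omega> = cpS \<mu> n \<Omega> S \<tau> {x. x i = \<omega> \<and> x j = \<omega>}
      - cpS \<mu> n \<Omega> S \<tau> {x. x i = \<omega>} * cpS \<mu> n \<Omega> S \<tau> {x. x j = \<omega>}"

definition Gf :: "(nat \<Rightarrow> nat) pmf \<Rightarrow> nat \<Rightarrow> nat set \<Rightarrow> nat set \<Rightarrow> real" where
  "Gf \<mu> n \<Omega> S = (\<Sum>\<tau>\<in>configs n \<Omega>. pmf \<mu> \<tau> * (\<Sum>i<n. \<Sum>j<n. \<Sum>\<omega>\<in>\<Omega>. (covs \<mu> n \<Omega> S \<tau> i j \<omega>)\<^sup>2))"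

lemma Kc_facts:
  assumes "\<tau> \<in> configs n \<Omega>"
  shows "\<tau> \<in> Kc n \<Omega> S \<tau>" "Kc n \<Omega> S \<tau> \<subseteq> configs n \<Omega>"
    "\<And>y. y \<in> Kc n \<Omega> S \<tau> \<Longrightarrow> Kc n \<Omega> S y = Kc n \<Omega> S \<tau>"
  using assms unfolding Kc_def by auto

lemma Kc_insert_sub: "y \<in> Kc n \<Omega> S \<tau> \<Longrightarrow> Kc n \<Omega> (insert j S) y \<subseteq> Kc n \<Omega> S \<tau>"
  unfolding Kc_def by auto

lemma sum_swap3: "(\<Sum>y\<in>K. \<Sum>i\<in>A. \<Sum>\<omega>\<in>B. f y i \<omega>) = (\<Sum>i\<in>A. \<Sum>\<omega>\<in>B. \<Sum>y\<in>K. (f y i \<omega>::real))"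
  by (rule trans[OF sum.swap], rule sum.cong[OF refl], rule sum.swap)

lemma pot_step:
  assumes fin: "finite \<Omega>"
  shows "pot \<mu> n \<Omega> (insert j S) - pot \<mu> n \<Omega> S \<ge>
    (\<Sum>\<tau>\<in>configs n \<Omega>. pmf \<mu> \<tau> * (\<Sum>i<n. \<Sum>\<omega>\<in>\<Omega>. (covs \<mu> n \<Omega> S \<tau> i j \<omega>)\<^sup>2))"
proof -
  define C where "C = configs n \<Omega>"
  define w where "w = pmf \<mu>"
  have finC: "finite C" unfolding C_def by (rule finite_configs[OF fin])
  define Fj where "Fj = (\<lambda>\<tau>. \<Sum>i<n. \<Sum>\<omega>\<in>\<Omega>. (cpS \<mu> n \<Omega> (insert j S) \<tau> {x. x i = \<omega>})\<^sup>2)"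
  have "pot \<mu> n \<Omega> (insert j S) = (\<Sum>\<tau>\<in>C. w \<tau> * Fj \<tau>)"
    unfolding pot_def C_def w_def Fj_def ..
  also have "\<dots> = (\<Sum>\<tau>\<in>C. w \<tau> * ((\<Sum>y\<in>Kc n \<Omega> S \<tau>. w y * Fj y) / mw w (Kc n \<Omega> S \<tau>)))"
  proof (rule tower[OF finC])
    fix x assume x: "x \<in> C"
    then have xC: "x \<in> configs n \<Omega>" by (simp add: C_def)
    show "0 \<le> w x" by (simp add: w_def)
    show "x \<in> Kc n \<Omega> S x" by (rule Kc_facts(1)[OF xC])
    show "Kc n \<Omega> S x \<subseteq> C" unfolding C_def by (rule Kc_facts(2)[OF xC])
    fix y assume "y \<in> Kc n \<Omega> S x"
    then show "Kc n \<Omega> S y = Kc n \<Omega> S x" by (rule Kc_facts(3)[OF xC])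
  qed
  finally have P1: "pot \<mu> n \<Omega> (insert j S) = \<dots>" .
  have "pot \<mu> n \<Omega> (insert j S) - pot \<mu> n \<Omega> S =
     (\<Sum>\<tau>\<in>C. w \<tau> * ((\<Sum>y\<in>Kc n \<Omega> S \<tau>. w y * Fj y) / mw w (Kc n \<Omega> S \<tau>) -
        (\<Sum>i<n. \<Sum>\<omega>\<in>\<Omega>. (cpS \<mu> n \<Omega> S \<tau> {x. x i = \<omega>})\<^sup>2)))"
    unfolding P1 pot_def[of \<mu> n \<Omega> S] by (simp add: C_def w_def sum_subtractf right_diff_distrib)
  also have "\<dots> \<ge> (\<Sum>\<tau>\<in>C. w \<tau> * (\<Sum>i<n. \<Sum>\<omega>\<in>\<Omega>. (covs \<mu> n \<Omega> S \<tau> i j \<omega>)\<^sup>2))"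
  proof (rule sum_mono)
    fix \<tau> assume \<tau>: "\<tau> \<in> C"
    show "w \<tau> * (\<Sum>i<n. \<Sum>\<omega>\<in>\<Omega>. (covs \<mu> n \<Omega> S \<tau> i j \<omega>)\<^sup>2) \<le>
      w \<tau> * ((\<Sum>y\<in>Kc n \<Omega> S \<tau>. w y * Fj y) / mw w (Kc n \<Omega> S \<tau>) -
        (\<Sum>i<n. \<Sum>\<omega>\<in>\<Omega>. (cpS \<mu> n \<Omega> S \<tau> {x. x i = \<omega>})\<^sup>2))"
    proof (cases "w \<tau> = 0")
      case True then show ?thesis by simp
    next
      case False
      define K where "K = Kc n \<Omega> S \<tau>"
      have w0: "w \<tau> > 0" using False by (simp add: w_def order_less_le)
      have \<tau>C: "\<tau> \<in> configs n \<Omega>" using \<tau> by (simp add: C_def)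
      have KC: "K \<subseteq> C" unfolding K_def C_def by (rule Kc_facts(2)[OF \<tau>C])
      have finK: "finite K" using KC finC finite_subset by blast
      have tK: "\<tau> \<in> K" unfolding K_def by (rule Kc_facts(1)[OF \<tau>C])
      have posK: "mw w K > 0"
      proof -
        have "w \<tau> \<le> mw w K" unfolding mw_def by (rule member_le_sum[OF tK]) (auto simp: w_def finK)
        then show ?thesis using w0 by simp
      qed
      have loc: "(covs \<mu> n \<Omega> S \<tau> i j \<omega>)\<^sup>2 \<le>
          (\<Sum>y\<in>K. w y * (cpS \<mu> n \<Omega> (insert j S) y {x. x i = \<omega>})\<^sup>2) / mw w K - (cpS \<mu> n \<Omega> S \<tau> {x. x i = \<omega>})\<^sup>2"
        for i \<omega>
      proof -
        have "(mw w (K \<inter> ({x. x i = \<omega>} \<inter> {x. x j = \<omega>})) / mw w K - (mw w (K \<inter> {x. x i = \<omega>}) / mw w K) * (mw w (K \<inter> {x. x j = \<omega>}) / mw w K))\<^sup>2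
          \<le> (\<Sum>y\<in>K. w y * (mw w (Kc n \<Omega> (insert j S) y \<inter> {x. x i = \<omega>}) / mw w (Kc n \<Omega> (insert j S) y))\<^sup>2) / mw w K
            - (mw w (K \<inter> {x. x i = \<omega>}) / mw w K)\<^sup>2"
        proof (rule local_cs[OF finK _ posK])
          fix y assume y: "y \<in> K"
          then have yC: "y \<in> configs n \<Omega>" using KC C_def by blast
          show "0 \<le> w y" by (simp add: w_def)
          show "y \<in> Kc n \<Omega> (insert j S) y" by (rule Kc_facts(1)[OF yC])
          show "Kc n \<Omega> (insert j S) y \<subseteq> K" using y unfolding K_def by (rule Kc_insert_sub)
          fix z assume z: "z \<in> Kc n \<Omega> (insert j S) y"
          show "Kc n \<Omega> (insert j S) z = Kc n \<Omega> (insert j S) y" using Kc_facts(3)[OF yC z] .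
          show "(z \<in> {x. x j = \<omega>}) = (y \<in> {x. x j = \<omega>})" using z unfolding Kc_def by auto
        qed
        then show ?thesis unfolding covs_def cpS_def K_def w_def Collect_conj_eq by simp
      qed
      have "(\<Sum>i<n. \<Sum>\<omega>\<in>\<Omega>. (covs \<mu> n \<Omega> S \<tau> i j \<omega>)\<^sup>2) \<le>
          (\<Sum>i<n. \<Sum>\<omega>\<in>\<Omega>. (\<Sum>y\<in>K. w y * (cpS \<mu> n \<Omega> (insert j S) y {x. x i = \<omega>})\<^sup>2) / mw w K - (cpS \<mu> n \<Omega> S \<tau> {x. x i = \<omega>})\<^sup>2)"
        by (intro sum_mono loc)
      also have "\<dots> = (\<Sum>y\<in>K. w y * Fj y) / mw w K - (\<Sum>i<n. \<Sum>\<omega>\<in>\<Omega>. (cpS \<mu> n \<Omega> S \<tau> {x. x i = \<omega>})\<^sup>2)"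
      proof -
        have "(\<Sum>y\<in>K. w y * Fj y) = (\<Sum>y\<in>K. \<Sum>i<n. \<Sum>\<omega>\<in>\<Omega>. w y * (cpS \<mu> n \<Omega> (insert j S) y {x. x i = \<omega>})\<^sup>2)"
          unfolding Fj_def by (simp add: sum_distrib_left)
        also have "\<dots> = (\<Sum>i<n. \<Sum>\<omega>\<in>\<Omega>. \<Sum>y\<in>K. w y * (cpS \<mu> n \<Omega> (insert j S) y {x. x i = \<omega>})\<^sup>2)"
          by (rule sum_swap3)
        finally show ?thesis by (simp add: sum_subtractf sum_divide_distrib)
      qed
      finally show ?thesis using w0 unfolding K_def by (intro mult_left_mono) auto
    qed
  qed
  finally show ?thesis unfolding C_def w_def .
qed



lemma finite_Kc: "finite \<Omega> \<Longrightarrow> finite (Kc n \<Omega> S \<tau>)"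
  unfolding Kc_def using finite_configs by auto

lemma mw_nonneg: "0 \<le> mw (pmf \<mu>) A"
  unfolding mw_def by (intro sum_nonneg) auto

lemma cpS_nonneg: "0 \<le> cpS \<mu> n \<Omega> S \<tau> A"
  unfolding cpS_def by (intro divide_nonneg_nonneg mw_nonneg)

lemma sum_cpS_le1:
  assumes fin: "finite \<Omega>"
  shows "(\<Sum>\<omega>\<in>\<Omega>. cpS \<mu> n \<Omega> S \<tau> {x. x i = \<omega>}) \<le> 1"
proof -
  define K where "K = Kc n \<Omega> S \<tau>"
  have finK: "finite K" unfolding K_def by (rule finite_Kc[OF fin])
  have "(\<Sum>\<omega>\<in>\<Omega>. mw (pmf \<mu>) (K \<inter> {x. x i = \<omega>})) = (\<Sum>\<omega>\<in>\<Omega>. \<Sum>x\<in>K. pmf \<mu> x * (if x \<in> {x. x i = \<omega>} then 1 else 0))"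
    using finK by (simp add: mw_inter_ind)
  also have "\<dots> = (\<Sum>x\<in>K. pmf \<mu> x * (\<Sum>\<omega>\<in>\<Omega>. if x i = \<omega> then 1 else 0))"
    by (subst sum.swap) (simp add: sum_distrib_left)
  also have "\<dots> \<le> (\<Sum>x\<in>K. pmf \<mu> x)"
    by (intro sum_mono mult_right_le_one_le) (auto simp: fin)
  finally have "(\<Sum>\<omega>\<in>\<Omega>. mw (pmf \<mu>) (K \<inter> {x. x i = \<omega>})) \<le> mw (pmf \<mu>) K" by (simp add: mw_def)
  note le = this
  show ?thesis
  proof (cases "mw (pmf \<mu>) K = 0")
    case False
    then have "mw (pmf \<mu>) K > 0" using mw_nonneg[of \<mu> K] by linarith
    with le show ?thesis unfolding cpS_def K_def[symmetric] sum_divide_distrib[symmetric] by simp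
  next
    case True then show ?thesis unfolding cpS_def K_def[symmetric] by simp
  qed
qed

lemma sum_cpS_sq_le1:
  assumes fin: "finite \<Omega>"
  shows "(\<Sum>\<omega>\<in>\<Omega>. (cpS \<mu> n \<Omega> S \<tau> {x. x i = \<omega>})\<^sup>2) \<le> 1"
proof -
  have le1: "cpS \<mu> n \<Omega> S \<tau> {x. x i = \<omega>} \<le> 1" if "\<omega> \<in> \<Omega>" for \<omega>
  proof -
    have "cpS \<mu> n \<Omega> S \<tau> {x. x i = \<omega>} \<le> (\<Sum>\<omega>\<in>\<Omega>. cpS \<mu> n \<Omega> S \<tau> {x. x i = \<omega>})"
      by (rule member_le_sum[OF that]) (auto simp: cpS_nonneg fin)
    then show ?thesis using sum_cpS_le1[OF fin, of \<mu> n S \<tau> i] by linarith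
  qed
  have "(\<Sum>\<omega>\<in>\<Omega>. (cpS \<mu> n \<Omega> S \<tau> {x. x i = \<omega>})\<^sup>2) \<le> (\<Sum>\<omega>\<in>\<Omega>. cpS \<mu> n \<Omega> S \<tau> {x. x i = \<omega>})"
  proof (intro sum_mono)
    fix \<omega> assume "\<omega> \<in> \<Omega>"
    then have "cpS \<mu> n \<Omega> S \<tau> {x. x i = \<omega>} * cpS \<mu> n \<Omega> S \<tau> {x. x i = \<omega>} \<le> 1 * cpS \<mu> n \<Omega> S \<tau> {x. x i = \<omega>}"
      using le1 cpS_nonneg by (intro mult_right_mono) auto
    then show "(cpS \<mu> n \<Omega> S \<tau> {x. x i = \<omega>})\<^sup>2 \<le> cpS \<mu> n \<Omega> S \<tau> {x. x i = \<omega>}" by (simp add: power2_eq_square)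
  qed
  then show ?thesis using sum_cpS_le1[OF fin, of \<mu> n S \<tau> i] by linarith
qed

lemma sum_pmf_configs:
  assumes fin: "finite \<Omega>" and supp: "set_pmf \<mu> \<subseteq> configs n \<Omega>"
  shows "(\<Sum>\<tau>\<in>configs n \<Omega>. pmf \<mu> \<tau>) = 1"
  by (rule sum_pmf_eq_1[OF finite_configs[OF fin] supp])

lemma pot_bounds:
  assumes fin: "finite \<Omega>" and supp: "set_pmf \<mu> \<subseteq> configs n \<Omega>"
  shows "0 \<le> pot \<mu> n \<Omega> S" "pot \<mu> n \<Omega> S \<le> real n"
proof -
  show "0 \<le> pot \<mu> n \<Omega> S" unfolding pot_def by (intro sum_nonneg mult_nonneg_nonneg) auto
  have "pot \<mu> n \<Omega> S \<le> (\<Sum>\<tau>\<in>configs n \<Omega>. pmf \<mu> \<tau> * real n)"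
    unfolding pot_def
  proof (intro sum_mono mult_left_mono)
    fix \<tau>
    have "(\<Sum>i<n. \<Sum>\<omega>\<in>\<Omega>. (cpS \<mu> n \<Omega> S \<tau> {x. x i = \<omega>})\<^sup>2) \<le> (\<Sum>i<n. 1)"
      by (intro sum_mono sum_cpS_sq_le1[OF fin])
    then show "(\<Sum>i<n. \<Sum>\<omega>\<in>\<Omega>. (cpS \<mu> n \<Omega> S \<tau> {x. x i = \<omega>})\<^sup>2) \<le> real n" by simp
  qed auto
  also have "\<dots> = real n" using sum_pmf_configs[OF fin supp] by (simp add: sum_distrib_right[symmetric])
  finally show "pot \<mu> n \<Omega> S \<le> real n" .
qed

lemma pinned_Kc: "pinned n \<Omega> I (restrict \<tau> I) = Kc n \<Omega> I \<tau>"
  unfolding pinned_def Kc_def by auto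

lemma cond_measure:
  assumes fin: "finite \<Omega>" and supp: "set_pmf \<mu> \<subseteq> configs n \<Omega>" and \<tau>: "\<tau> \<in> set_pmf \<mu>"
  shows "measure_pmf.prob (cond_dist n \<Omega> \<mu> I (restrict \<tau> I)) A = cpS \<mu> n \<Omega> I \<tau> A"
proof -
  define P where "P = Kc n \<Omega> I \<tau>"
  have \<sigma>: "restrict \<tau> I \<in> set_pmf (marg \<mu> I)" unfolding marg_def using \<tau> by auto
  have cd: "cond_dist n \<Omega> \<mu> I (restrict \<tau> I) = cond_pmf \<mu> P"
    unfolding cond_dist_eq[OF supp \<sigma>] pinned_Kc P_def ..
  have ne: "set_pmf \<mu> \<inter> P \<noteq> {}" unfolding P_def using \<tau> supp Kc_facts(1)[of \<tau> n \<Omega> I] by blast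
  have finP: "finite P" unfolding P_def by (rule finite_Kc[OF fin])
  have mP: "measure_pmf.prob \<mu> P = mw (pmf \<mu>) P"
    unfolding mw_def by (rule measure_measure_pmf_finite[OF finP])
  have "measure_pmf.prob (cond_pmf \<mu> P) A = measure_pmf.prob (cond_pmf \<mu> P) (A \<inter> set_pmf (cond_pmf \<mu> P))"
    by (rule measure_Int_set_pmf[symmetric])
  also have "A \<inter> set_pmf (cond_pmf \<mu> P) = (P \<inter> A) \<inter> set_pmf (cond_pmf \<mu> P)"
    using ne by (auto simp: set_cond_pmf)
  also have "measure_pmf.prob (cond_pmf \<mu> P) \<dots> = measure_pmf.prob (cond_pmf \<mu> P) (P \<inter> A)"
    by (rule measure_Int_set_pmf)
  also have "\<dots> = (\<Sum>x\<in>P \<inter> A. pmf (cond_pmf \<mu> P) x)"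
    by (rule measure_measure_pmf_finite) (use finP in auto)
  also have "\<dots> = (\<Sum>x\<in>P \<inter> A. pmf \<mu> x / mw (pmf \<mu>) P)"
    by (intro sum.cong refl) (simp add: pmf_cond[OF ne] mP)
  also have "\<dots> = cpS \<mu> n \<Omega> I \<tau> A"
    unfolding cpS_def P_def[symmetric] mw_def by (simp add: sum_divide_distrib)
  finally show ?thesis unfolding cd .
qed

lemma Qs_cond:
  assumes fin: "finite \<Omega>" and supp: "set_pmf \<mu> \<subseteq> configs n \<Omega>" and \<tau>: "\<tau> \<in> set_pmf \<mu>"
  shows "Qs n \<Omega> (cond_dist n \<Omega> \<mu> I (restrict \<tau> I)) = (\<Sum>i<n. \<Sum>j<n. \<Sum>\<omega>\<in>\<Omega>. (covs \<mu> n \<Omega> I \<tau> i j \<omega>)\<^sup>2)"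
  unfolding Qs_def cv_def pr_def pr2_def covs_def cond_measure[OF assms] ..

lemma exp_marg:
  fixes g :: "(nat \<Rightarrow> nat) \<Rightarrow> real"
  assumes fin: "finite \<Omega>" and supp: "set_pmf \<mu> \<subseteq> configs n \<Omega>"
  shows "measure_pmf.expectation (marg \<mu> I) g = (\<Sum>\<tau>\<in>configs n \<Omega>. pmf \<mu> \<tau> * g (restrict \<tau> I))"
  unfolding marg_def integral_map_pmf
  by (subst integral_measure_pmf_real[OF finite_configs[OF fin]]) (use supp in \<open>auto simp: mult.commute\<close>)

lemma exp_marg_Qs:
  assumes fin: "finite \<Omega>" and supp: "set_pmf \<mu> \<subseteq> configs n \<Omega>"
  shows "measure_pmf.expectation (marg \<mu> I) (\<lambda>\<sigma>. Qs n \<Omega> (cond_dist n \<Omega> \<mu> I \<sigma>)) = Gf \<mu> n \<Omega> I"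
  unfolding exp_marg[OF fin supp] Gf_def
proof (intro sum.cong refl)
  fix \<tau> assume "\<tau> \<in> configs n \<Omega>"
  show "pmf \<mu> \<tau> * Qs n \<Omega> (cond_dist n \<Omega> \<mu> I (restrict \<tau> I)) =
        pmf \<mu> \<tau> * (\<Sum>i<n. \<Sum>j<n. \<Sum>\<omega>\<in>\<Omega>. (covs \<mu> n \<Omega> I \<tau> i j \<omega>)\<^sup>2)"
  proof (cases "\<tau> \<in> set_pmf \<mu>")
    case True then show ?thesis by (simp add: Qs_cond[OF fin supp])
  next
    case False then show ?thesis by (simp add: set_pmf_eq)
  qed
qed



definition Ss :: "nat \<Rightarrow> nat \<Rightarrow> nat set set" where
  "Ss n t = {I. I \<subseteq> {..<n} \<and> card I = t}"

lemma finite_Ss: "finite (Ss n t)"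
  unfolding Ss_def by (rule finite_subset[of _ "Pow {..<n}"]) auto

lemma card_Ss: "card (Ss n t) = n choose t"
  unfolding Ss_def using n_subsets[of "{..<n}" t] by simp

lemma double_count:
  fixes f :: "nat set \<Rightarrow> real"
  shows "(\<Sum>S\<in>Ss n t. \<Sum>j\<in>{..<n} - S. f (insert j S)) = real (Suc t) * (\<Sum>S\<in>Ss n (Suc t). f S)"
proof -
  define A where "A = Sigma (Ss n t) (\<lambda>S. {..<n} - S)"
  define B where "B = Sigma (Ss n (Suc t)) (\<lambda>S. S)"
  define h where "h = (\<lambda>p::nat set \<times> nat. (insert (snd p) (fst p), snd p))"
  define h' where "h' = (\<lambda>p::nat set \<times> nat. (fst p - {snd p}, snd p))"
  have bij: "bij_betw h A B"
  proof (rule bij_betw_byWitness[where f'=h'])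
    show "\<forall>a\<in>A. h' (h a) = a" unfolding A_def h_def h'_def by auto
    show "\<forall>a\<in>B. h (h' a) = a" unfolding B_def h_def h'_def by auto
    show "h ` A \<subseteq> B"
    proof
      fix q assume "q \<in> h ` A"
      then obtain S j where S: "S \<in> Ss n t" and j: "j \<in> {..<n} - S" and q: "q = (insert j S, j)"
        unfolding A_def h_def by auto
      have finS: "finite S" using S unfolding Ss_def by (auto intro: finite_subset)
      show "q \<in> B" unfolding q B_def using S j finS by (auto simp: Ss_def)
    qed
    show "h' ` B \<subseteq> A"
    proof
      fix q assume "q \<in> h' ` B"
      then obtain S j where S: "S \<in> Ss n (Suc t)" and j: "j \<in> S" and q: "q = (S - {j}, j)"
        unfolding B_def h'_def by auto
      have finS: "finite S" using S unfolding Ss_def by (auto intro: finite_subset)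
      show "q \<in> A" unfolding q A_def using S j finS by (auto simp: Ss_def)
    qed
  qed
  have "(\<Sum>S\<in>Ss n t. \<Sum>j\<in>{..<n} - S. f (insert j S)) = (\<Sum>p\<in>A. f (fst (h p)))"
    unfolding A_def h_def by (subst sum.Sigma) (auto simp: finite_Ss case_prod_unfold)
  also have "\<dots> = (\<Sum>p\<in>B. f (fst p))" using sum.reindex_bij_betw[OF bij, of "\<lambda>p. f (fst p)"] .
  also have "\<dots> = (\<Sum>S\<in>Ss n (Suc t). \<Sum>j\<in>S. f S)"
    unfolding B_def by (subst sum.Sigma) (auto simp: finite_Ss Ss_def case_prod_unfold intro: finite_subset)
  also have "\<dots> = (\<Sum>S\<in>Ss n (Suc t). real (Suc t) * f S)"
    by (intro sum.cong refl) (simp add: Ss_def)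
  finally show ?thesis by (simp add: sum_distrib_left)
qed

lemma Gf_step:
  assumes fin: "finite \<Omega>" and S: "S \<in> Ss n t"
  shows "Gf \<mu> n \<Omega> S \<le> (\<Sum>j\<in>{..<n} - S. pot \<mu> n \<Omega> (insert j S)) - real (n - t) * pot \<mu> n \<Omega> S"
proof -
  have SS: "S \<subseteq> {..<n}" and cS: "card S = t" using S by (auto simp: Ss_def)
  have finS: "finite S" using SS finite_subset by blast
  have "Gf \<mu> n \<Omega> S = (\<Sum>\<tau>\<in>configs n \<Omega>. pmf \<mu> \<tau> * (\<Sum>j<n. \<Sum>i<n. \<Sum>\<omega>\<in>\<Omega>. (covs \<mu> n \<Omega> S \<tau> i j \<omega>)\<^sup>2))"
    unfolding Gf_def by (intro sum.cong refl arg_cong[where f="\<lambda>x. _ * x"] sum.swap)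
  also have "\<dots> = (\<Sum>j<n. \<Sum>\<tau>\<in>configs n \<Omega>. pmf \<mu> \<tau> * (\<Sum>i<n. \<Sum>\<omega>\<in>\<Omega>. (covs \<mu> n \<Omega> S \<tau> i j \<omega>)\<^sup>2))"
    by (simp add: sum_distrib_left sum.swap[of _ "configs n \<Omega>"])
  also have "\<dots> \<le> (\<Sum>j<n. pot \<mu> n \<Omega> (insert j S) - pot \<mu> n \<Omega> S)"
    by (intro sum_mono pot_step[OF fin])
  also have "\<dots> = (\<Sum>j\<in>{..<n} - S. pot \<mu> n \<Omega> (insert j S) - pot \<mu> n \<Omega> S)"
  proof -
    have "{..<n} = ({..<n} - S) \<union> S" using SS by auto
    then have "(\<Sum>j<n. pot \<mu> n \<Omega> (insert j S) - pot \<mu> n \<Omega> S) =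
      (\<Sum>j\<in>{..<n} - S. pot \<mu> n \<Omega> (insert j S) - pot \<mu> n \<Omega> S) + (\<Sum>j\<in>S. pot \<mu> n \<Omega> (insert j S) - pot \<mu> n \<Omega> S)"
      by (metis (no_types, lifting) Diff_disjoint finS finite_Diff finite_lessThan sum.union_disjoint inf_commute)
    also have "(\<Sum>j\<in>S. pot \<mu> n \<Omega> (insert j S) - pot \<mu> n \<Omega> S) = 0"
      by (intro sum.neutral) (auto simp: insert_absorb)
    finally show ?thesis by simp
  qed
  also have "\<dots> = (\<Sum>j\<in>{..<n} - S. pot \<mu> n \<Omega> (insert j S)) - real (n - t) * pot \<mu> n \<Omega> S"
    using card_Diff_subset[OF finS SS] cS by (simp add: sum_subtractf)
  finally show ?thesis .
qed

lemma sum_Gf_step: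
  assumes fin: "finite \<Omega>"
  shows "(\<Sum>S\<in>Ss n t. Gf \<mu> n \<Omega> S) \<le>
     real (Suc t) * (\<Sum>S\<in>Ss n (Suc t). pot \<mu> n \<Omega> S) - real (n - t) * (\<Sum>S\<in>Ss n t. pot \<mu> n \<Omega> S)"
proof -
  have "(\<Sum>S\<in>Ss n t. Gf \<mu> n \<Omega> S) \<le> (\<Sum>S\<in>Ss n t. (\<Sum>j\<in>{..<n} - S. pot \<mu> n \<Omega> (insert j S)) - real (n - t) * pot \<mu> n \<Omega> S)"
    by (intro sum_mono Gf_step[OF fin])
  also have "\<dots> = real (Suc t) * (\<Sum>S\<in>Ss n (Suc t). pot \<mu> n \<Omega> S) - real (n - t) * (\<Sum>S\<in>Ss n t. pot \<mu> n \<Omega> S)"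
    by (simp add: sum_subtractf double_count sum_distrib_left)
  finally show ?thesis .
qed



definition Avg :: "(nat \<Rightarrow> nat) pmf \<Rightarrow> nat \<Rightarrow> nat set \<Rightarrow> nat \<Rightarrow> real" where
  "Avg \<mu> n \<Omega> t = (\<Sum>S\<in>Ss n t. pot \<mu> n \<Omega> S) / real (n choose t)"

lemma binom_rel: "real (Suc t) * real (n choose Suc t) = real (n - t) * real (n choose t)"
proof -
  have "Suc t * (n choose Suc t) = (n - t) * (n choose t)"
    using binomial_absorption[of t n] binomial_absorb_comp[of n t] by simp
  then show ?thesis by (metis of_nat_mult)
qed

lemma Avg_bounds:
  assumes fin: "finite \<Omega>" and supp: "set_pmf \<mu> \<subseteq> configs n \<Omega>" and t: "t \<le> n"
  shows "0 \<le> Avg \<mu> n \<Omega> t" "Avg \<mu> n \<Omega> t \<le> real n"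
proof -
  have B: "real (n choose t) > 0" using t by simp
  show "0 \<le> Avg \<mu> n \<Omega> t" unfolding Avg_def using pot_bounds(1)[OF fin supp]
    by (intro divide_nonneg_pos sum_nonneg B) auto
  have "(\<Sum>S\<in>Ss n t. pot \<mu> n \<Omega> S) \<le> (\<Sum>S\<in>Ss n t. real n)"
    by (intro sum_mono pot_bounds(2)[OF fin supp])
  also have "\<dots> = real (n choose t) * real n" by (simp add: card_Ss)
  finally show "Avg \<mu> n \<Omega> t \<le> real n" unfolding Avg_def using B by (simp add: divide_le_eq mult.commute)
qed

lemma Gf_nonneg: "0 \<le> Gf \<mu> n \<Omega> S"
  unfolding Gf_def by (intro sum_nonneg mult_nonneg_nonneg) auto

lemma avg_step:
  assumes fin: "finite \<Omega>" and t: "Suc t \<le> n"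
  shows "(\<Sum>S\<in>Ss n t. Gf \<mu> n \<Omega> S) / real (n choose t) \<le> real n * (Avg \<mu> n \<Omega> (Suc t) - Avg \<mu> n \<Omega> t)"
proof -
  define P0 where "P0 = (\<Sum>S\<in>Ss n t. pot \<mu> n \<Omega> S)"
  define P1 where "P1 = (\<Sum>S\<in>Ss n (Suc t). pot \<mu> n \<Omega> S)"
  define B0 where "B0 = real (n choose t)"
  define B1 where "B1 = real (n choose Suc t)"
  have B0: "B0 > 0" "B1 > 0" using t by (auto simp: B0_def B1_def)
  have rel: "real (Suc t) * B1 = real (n - t) * B0" unfolding B0_def B1_def by (rule binom_rel)
  have "(\<Sum>S\<in>Ss n t. Gf \<mu> n \<Omega> S) \<le> real (Suc t) * P1 - real (n - t) * P0"
    unfolding P0_def P1_def by (rule sum_Gf_step[OF fin])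
  also have "real (Suc t) * P1 = real (Suc t) * B1 * (P1 / B1)" using B0 by simp
  also have "\<dots> = real (n - t) * B0 * (P1 / B1)" by (simp only: rel)
  finally have "(\<Sum>S\<in>Ss n t. Gf \<mu> n \<Omega> S) / B0 \<le> (real (n - t) * B0 * (P1 / B1) - real (n - t) * P0) / B0"
    using B0 by (simp add: divide_right_mono)
  also have "\<dots> = real (n - t) * (P1 / B1 - P0 / B0)" using B0 by (simp add: field_simps)
  finally have le: "(\<Sum>S\<in>Ss n t. Gf \<mu> n \<Omega> S) / B0 \<le> real (n - t) * (P1 / B1 - P0 / B0)" .
  have "0 \<le> (\<Sum>S\<in>Ss n t. Gf \<mu> n \<Omega> S) / B0" using B0 by (intro divide_nonneg_pos sum_nonneg Gf_nonneg) auto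
  then have "0 \<le> real (n - t) * (P1 / B1 - P0 / B0)" using le by linarith
  moreover have "real (n - t) > 0" using t by simp
  ultimately have d0: "0 \<le> P1 / B1 - P0 / B0" by (simp add: zero_le_mult_iff)
  have "real (n - t) * (P1 / B1 - P0 / B0) \<le> real n * (P1 / B1 - P0 / B0)"
    by (intro mult_right_mono d0) simp
  with le show ?thesis unfolding Avg_def P0_def P1_def B0_def B1_def by simp
qed

lemma telescope:
  assumes fin: "finite \<Omega>" and supp: "set_pmf \<mu> \<subseteq> configs n \<Omega>" and T: "Suc T \<le> n"
  shows "(\<Sum>t\<in>{1..T}. (\<Sum>S\<in>Ss n t. Gf \<mu> n \<Omega> S) / real (n choose t)) \<le> real n * real n"
proof -
  have "(\<Sum>t\<in>{1..T}. (\<Sum>S\<in>Ss n t. Gf \<mu> n \<Omega> S) / real (n choose t)) \<le>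
      (\<Sum>t\<in>{1..T}. real n * (Avg \<mu> n \<Omega> (Suc t) - Avg \<mu> n \<Omega> t))"
    by (intro sum_mono avg_step[OF fin]) (use T in auto)
  also have "\<dots> = real n * (\<Sum>t\<in>{1..T}. Avg \<mu> n \<Omega> (Suc t) - Avg \<mu> n \<Omega> t)" by (simp add: sum_distrib_left)
  also have "(\<Sum>t\<in>{1..T}. Avg \<mu> n \<Omega> (Suc t) - Avg \<mu> n \<Omega> t) = Avg \<mu> n \<Omega> (Suc T) - Avg \<mu> n \<Omega> 1"
    by (rule sum_Suc_diff) simp
  also have "\<dots> \<le> real n" using Avg_bounds[OF fin supp, of "Suc T"] Avg_bounds[OF fin supp, of 1] T by simp
  finally show ?thesis by (simp add: mult_left_mono)
qed



lemma Ss_ne: "t \<le> n \<Longrightarrow> Ss n t \<noteq> {}"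
  using card_Ss[of n t] by (metis card.empty zero_less_binomial_iff less_numeral_extra(3))

lemma rand_subset_eq: "rand_subset n \<Theta> = bind_pmf \<Theta> (\<lambda>\<theta>. pmf_of_set (Ss n \<theta>))"
  unfolding rand_subset_def Ss_def ..

lemma rand_subset_supp:
  assumes "\<And>\<theta>. \<theta> \<in> set_pmf \<Theta> \<Longrightarrow> \<theta> \<le> n"
  shows "set_pmf (rand_subset n \<Theta>) \<subseteq> Pow {..<n}"
  unfolding rand_subset_eq using assms Ss_ne finite_Ss by (auto simp: Ss_def)

lemma exp_rand_subset:
  fixes F :: "nat set \<Rightarrow> real"
  assumes T: "1 \<le> T" "T \<le> n"
  shows "measure_pmf.expectation (rand_subset n (pmf_of_set {1..T})) F =
    (\<Sum>\<theta>\<in>{1..T}. (\<Sum>I\<in>Ss n \<theta>. F I) / real (n choose \<theta>)) / real T"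
proof -
  have "measure_pmf.expectation (rand_subset n (pmf_of_set {1..T})) F =
      (\<Sum>\<theta>\<in>{1..T}. measure_pmf.expectation (pmf_of_set (Ss n \<theta>)) F /\<^sub>R real (card {1..T}))"
    unfolding rand_subset_eq
    by (rule pmf_expectation_bind_pmf_of_set) (use T Ss_ne finite_Ss in auto)
  also have "\<dots> = (\<Sum>\<theta>\<in>{1..T}. (\<Sum>I\<in>Ss n \<theta>. F I) / real (n choose \<theta>) / real T)"
  proof (intro sum.cong refl)
    fix \<theta> assume "\<theta> \<in> {1..T}"
    then have "Ss n \<theta> \<noteq> {}" using T Ss_ne by auto
    then show "measure_pmf.expectation (pmf_of_set (Ss n \<theta>)) F /\<^sub>R real (card {1..T}) =
        (\<Sum>I\<in>Ss n \<theta>. F I) / real (n choose \<theta>) / real T"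
      by (simp add: integral_pmf_of_set finite_Ss card_Ss divide_inverse_commute)
  qed
  finally show ?thesis by (simp add: sum_divide_distrib)
qed

lemma exp_rand_pin:
  fixes h :: "nat set \<times> (nat \<Rightarrow> nat) \<Rightarrow> real"
  assumes fin: "finite \<Omega>" and supp: "set_pmf \<mu> \<subseteq> configs n \<Omega>"
    and \<Theta>: "\<And>\<theta>. \<theta> \<in> set_pmf \<Theta> \<Longrightarrow> \<theta> \<le> n"
  shows "measure_pmf.expectation (rand_pin n \<Theta> \<mu>) h =
     measure_pmf.expectation (rand_subset n \<Theta>) (\<lambda>I. measure_pmf.expectation (marg \<mu> I) (\<lambda>\<sigma>. h (I, \<sigma>)))"
proof -
  have sub: "set_pmf (rand_subset n \<Theta>) \<subseteq> Pow {..<n}" by (rule rand_subset_supp[OF \<Theta>])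
  have "measure_pmf.expectation (rand_pin n \<Theta> \<mu>) h =
     (\<Sum>I\<in>Pow {..<n}. pmf (rand_subset n \<Theta>) I *\<^sub>R measure_pmf.expectation (map_pmf (\<lambda>\<sigma>. (I, \<sigma>)) (marg \<mu> I)) h)"
    unfolding rand_pin_def
    by (rule pmf_expectation_bind) (use sub marg_fin[OF fin supp] in auto)
  also have "\<dots> = measure_pmf.expectation (rand_subset n \<Theta>) (\<lambda>I. measure_pmf.expectation (marg \<mu> I) (\<lambda>\<sigma>. h (I, \<sigma>)))"
    by (subst integral_measure_pmf[of "Pow {..<n}"]) (use sub in auto)
  finally show ?thesis .
qed

lemma fin_rand_subset:
  assumes "\<And>\<theta>. \<theta> \<in> set_pmf \<Theta> \<Longrightarrow> \<theta> \<le> n"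
  shows "finite (set_pmf (rand_subset n \<Theta>))"
  using rand_subset_supp[OF assms] finite_subset by blast

lemma fin_rand_pin:
  assumes fin: "finite \<Omega>" and supp: "set_pmf \<mu> \<subseteq> configs n \<Omega>"
    and \<Theta>: "\<And>\<theta>. \<theta> \<in> set_pmf \<Theta> \<Longrightarrow> \<theta> \<le> n"
  shows "finite (set_pmf (rand_pin n \<Theta> \<mu>))"
  unfolding rand_pin_def using fin_rand_subset[OF \<Theta>] marg_fin[OF fin supp] by simp

lemma rand_pin_supp:
  assumes "p \<in> set_pmf (rand_pin n \<Theta> \<mu>)"
  shows "snd p \<in> set_pmf (marg \<mu> (fst p))"
  using assms unfolding rand_pin_def by auto

lemma pin_Qs_bound:
  assumes fin: "finite \<Omega>" and supp: "set_pmf \<mu> \<subseteq> configs n \<Omega>" and T: "1 \<le> T" "Suc T \<le> n"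
  shows "measure_pmf.expectation (rand_pin n (pmf_of_set {1..T}) \<mu>) (\<lambda>p. Qs n \<Omega> (cond_dist n \<Omega> \<mu> (fst p) (snd p)))
     \<le> real n * real n / real T"
proof -
  have \<Theta>: "\<And>\<theta>. \<theta> \<in> set_pmf (pmf_of_set {1..T}) \<Longrightarrow> \<theta> \<le> n" using T by auto
  have "measure_pmf.expectation (rand_pin n (pmf_of_set {1..T}) \<mu>) (\<lambda>p. Qs n \<Omega> (cond_dist n \<Omega> \<mu> (fst p) (snd p)))
      = measure_pmf.expectation (rand_subset n (pmf_of_set {1..T})) (\<lambda>I. Gf \<mu> n \<Omega> I)"
    by (subst exp_rand_pin[OF fin supp \<Theta>]) (simp_all add: exp_marg_Qs[OF fin supp])
  also have "\<dots> = (\<Sum>\<theta>\<in>{1..T}. (\<Sum>I\<in>Ss n \<theta>. Gf \<mu> n \<Omega> I) / real (n choose \<theta>)) / real T"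
    by (rule exp_rand_subset) (use T in auto)
  also have "\<dots> \<le> real n * real n / real T"
    by (intro divide_right_mono telescope[OF fin supp T(2)]) simp
  finally show ?thesis .
qed



lemma exp_h_bound:
  assumes fin: "finite \<Omega>" and supp: "set_pmf \<mu> \<subseteq> configs n \<Omega>" and T: "1 \<le> T" "Suc T \<le> n"
  shows "measure_pmf.expectation (rand_pin n (pmf_of_set {1..T}) \<mu>)
      (\<lambda>p. sqrt (Qs n \<Omega> (cond_dist n \<Omega> \<mu> (fst p) (snd p))) / real n) \<le> 1 / sqrt (real T)"
proof -
  let ?R = "rand_pin n (pmf_of_set {1..T}) \<mu>"
  have \<Theta>: "\<And>\<theta>. \<theta> \<in> set_pmf (pmf_of_set {1..T}) \<Longrightarrow> \<theta> \<le> n" using T by auto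
  have finR: "finite (set_pmf ?R)" by (rule fin_rand_pin[OF fin supp \<Theta>])
  have n0: "real n > 0" using T by simp
  have "measure_pmf.expectation ?R (\<lambda>p. sqrt (Qs n \<Omega> (cond_dist n \<Omega> \<mu> (fst p) (snd p))) / real n)
     = measure_pmf.expectation ?R (\<lambda>p. sqrt (Qs n \<Omega> (cond_dist n \<Omega> \<mu> (fst p) (snd p)))) / real n"
    by simp
  also have "\<dots> \<le> sqrt (measure_pmf.expectation ?R (\<lambda>p. Qs n \<Omega> (cond_dist n \<Omega> \<mu> (fst p) (snd p)))) / real n"
    by (intro divide_right_mono exp_sqrt_le finR Qs_nonneg) simp
  also have "\<dots> \<le> sqrt (real n * real n / real T) / real n"
    by (intro divide_right_mono real_sqrt_le_mono pin_Qs_bound[OF fin supp T]) simp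
  also have "\<dots> = 1 / sqrt (real T)"
    using n0 by (simp add: real_sqrt_divide real_sqrt_mult)
  finally show ?thesis .
qed

lemma final_i:
  assumes fin: "finite \<Omega>" and ne: "\<Omega> \<noteq> {}" and supp: "set_pmf \<mu> \<subseteq> configs n \<Omega>" and T: "1 \<le> T" "Suc T \<le> n"
  shows "measure_pmf.expectation (rand_pin n (pmf_of_set {1..T}) \<mu>)
     (\<lambda>(I, \<sigma>). cut_dist n \<Omega> (cond_dist n \<Omega> \<mu> I \<sigma>) (prod_marg n (cond_dist n \<Omega> \<mu> I \<sigma>)))
     \<le> sqrt (1 / real n + 1 / sqrt (real T))"
proof -
  let ?R = "rand_pin n (pmf_of_set {1..T}) \<mu>"
  define h where "h = (\<lambda>p. sqrt (Qs n \<Omega> (cond_dist n \<Omega> \<mu> (fst p) (snd p))) / real n)"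
  have \<Theta>: "\<And>\<theta>. \<theta> \<in> set_pmf (pmf_of_set {1..T}) \<Longrightarrow> \<theta> \<le> n" using T by auto
  have finR: "finite (set_pmf ?R)" by (rule fin_rand_pin[OF fin supp \<Theta>])
  have n0: "n > 0" using T by simp
  have int: "\<And>g::_ \<Rightarrow> real. integrable ?R g" by (rule integrable_measure_pmf_finite[OF finR])
  have h0: "\<And>p. 0 \<le> h p" unfolding h_def by (simp add: Qs_nonneg)
  have "measure_pmf.expectation ?R
     (\<lambda>(I, \<sigma>). cut_dist n \<Omega> (cond_dist n \<Omega> \<mu> I \<sigma>) (prod_marg n (cond_dist n \<Omega> \<mu> I \<sigma>)))
     \<le> measure_pmf.expectation ?R (\<lambda>p. sqrt (1 / real n + h p))"
  proof (rule integral_mono_AE[OF int int])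
    show "AE p in measure_pmf ?R. (case p of (I, \<sigma>) \<Rightarrow> cut_dist n \<Omega> (cond_dist n \<Omega> \<mu> I \<sigma>) (prod_marg n (cond_dist n \<Omega> \<mu> I \<sigma>)))
        \<le> sqrt (1 / real n + h p)"
    proof (rule AE_pmfI)
      fix p assume p: "p \<in> set_pmf ?R"
      obtain I \<sigma> where p_eq: "p = (I, \<sigma>)" by (cases p)
      have "\<sigma> \<in> set_pmf (marg \<mu> I)" using rand_pin_supp[OF p] p_eq by simp
      then have cs: "set_pmf (cond_dist n \<Omega> \<mu> I \<sigma>) \<subseteq> configs n \<Omega>" by (rule cond_dist_supp[OF supp])
      show "(case p of (I, \<sigma>) \<Rightarrow> cut_dist n \<Omega> (cond_dist n \<Omega> \<mu> I \<sigma>) (prod_marg n (cond_dist n \<Omega> \<mu> I \<sigma>)))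
        \<le> sqrt (1 / real n + h p)"
        unfolding p_eq h_def using cut_i[OF fin ne n0 cs] by simp
    qed
  qed
  also have "\<dots> \<le> sqrt (measure_pmf.expectation ?R (\<lambda>p. 1 / real n + h p))"
    by (rule exp_sqrt_le[OF finR]) (use h0 in auto)
  also have "measure_pmf.expectation ?R (\<lambda>p. 1 / real n + h p) = 1 / real n + measure_pmf.expectation ?R h"
    using int by simp
  also have "\<dots> \<le> 1 / real n + 1 / sqrt (real T)"
    using exp_h_bound[OF fin supp T] unfolding h_def by simp
  finally show ?thesis by simp
qed

lemma final_ii:
  assumes fin: "finite \<Omega>" and ne: "\<Omega> \<noteq> {}" and supp: "set_pmf \<mu> \<subseteq> configs n \<Omega>" and T: "1 \<le> T" "Suc T \<le> n"
  shows "measure_pmf.expectation (rand_subset n (pmf_of_set {1..T}))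
     (\<lambda>I. cut_dist n \<Omega> \<mu> (bar_mix n \<Omega> \<mu> I)) \<le> sqrt (1 / real n + 1 / sqrt (real T))"
proof -
  let ?S = "rand_subset n (pmf_of_set {1..T})"
  let ?R = "rand_pin n (pmf_of_set {1..T}) \<mu>"
  define h where "h = (\<lambda>p. sqrt (Qs n \<Omega> (cond_dist n \<Omega> \<mu> (fst p) (snd p))) / real n)"
  define g where "g = (\<lambda>I. measure_pmf.expectation (marg \<mu> I) (\<lambda>\<sigma>. h (I, \<sigma>)))"
  have \<Theta>: "\<And>\<theta>. \<theta> \<in> set_pmf (pmf_of_set {1..T}) \<Longrightarrow> \<theta> \<le> n" using T by auto
  have finS: "finite (set_pmf ?S)" by (rule fin_rand_subset[OF \<Theta>])
  have n0: "n > 0" using T by simp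
  have int: "\<And>g::_ \<Rightarrow> real. integrable ?S g" by (rule integrable_measure_pmf_finite[OF finS])
  have g0: "\<And>I. 0 \<le> g I" unfolding g_def h_def by (intro integral_nonneg_AE AE_pmfI) (simp add: Qs_nonneg)
  have "measure_pmf.expectation ?S (\<lambda>I. cut_dist n \<Omega> \<mu> (bar_mix n \<Omega> \<mu> I))
     \<le> measure_pmf.expectation ?S (\<lambda>I. sqrt (1 / real n + g I))"
  proof (rule integral_mono_AE[OF int int], rule AE_pmfI)
    fix I
    have "cut_dist n \<Omega> \<mu> (bar_mix n \<Omega> \<mu> I) \<le>
     sqrt (1 / real n + measure_pmf.expectation (marg \<mu> I) (\<lambda>\<sigma>. sqrt (Qs n \<Omega> (cond_dist n \<Omega> \<mu> I \<sigma>))) / real n)"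
      by (rule cut_ii[OF fin ne n0 supp])
    also have "measure_pmf.expectation (marg \<mu> I) (\<lambda>\<sigma>. sqrt (Qs n \<Omega> (cond_dist n \<Omega> \<mu> I \<sigma>))) / real n = g I"
      unfolding g_def h_def by simp
    finally show "cut_dist n \<Omega> \<mu> (bar_mix n \<Omega> \<mu> I) \<le> sqrt (1 / real n + g I)" .
  qed
  also have "\<dots> \<le> sqrt (measure_pmf.expectation ?S (\<lambda>I. 1 / real n + g I))"
    by (rule exp_sqrt_le[OF finS]) (use g0 in auto)
  also have "measure_pmf.expectation ?S (\<lambda>I. 1 / real n + g I) = 1 / real n + measure_pmf.expectation ?S g"
    using int by simp
  also have "measure_pmf.expectation ?S g = measure_pmf.expectation ?R h"
    unfolding g_def by (rule exp_rand_pin[OF fin supp \<Theta>, symmetric])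
  also have "1 / real n + \<dots> \<le> 1 / real n + 1 / sqrt (real T)"
    using exp_h_bound[OF fin supp T] unfolding h_def by simp
  finally show ?thesis by simp
qed



lemma ln2_ge_half: "1/2 \<le> ln (2::real)"
proof -
  have "exp (1/2::real) \<le> 2"
  proof (rule ccontr)
    assume "\<not> exp (1/2::real) \<le> 2"
    then have a: "exp (1/2::real) > 2" by simp
    have "exp (1::real) = exp (1/2) * exp (1/2)" by (simp add: exp_add[symmetric])
    also have "\<dots> > 2 * 2" using a by (intro mult_strict_mono) auto
    finally show False using exp_le by simp
  qed
  then show ?thesis using ln_ge_iff[of 2 "1/2"] by simp
qed

lemma T_bound:
  fixes x :: real assumes x: "x \<ge> 2"
  shows "4 * x^4 + 2 < x^10"
proof -
  have x4: "x^4 \<ge> 16" using power_mono[OF x, of 4] by simp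
  have x6: "x^6 \<ge> 64" using power_mono[OF x, of 6] by simp
  have "x^10 = x^4 * x^6" by (simp add: power_add[symmetric])
  also have "\<dots> \<ge> x^4 * 64" using x6 x4 by (intro mult_left_mono) auto
  finally show ?thesis using x4 by linarith
qed

theorem theorem2p4:
  shows "\<exists>c::real. c > 0 \<and>
    (\<forall>\<Omega>::nat set. finite \<Omega> \<and> card \<Omega> \<ge> 2 \<longrightarrow>
      (\<forall>\<epsilon>::real. 0 < \<epsilon> \<and> \<epsilon> < 1/2 \<longrightarrow>
        (\<exists>n0::nat. n0 > 0 \<and> (\<exists>\<Theta>::nat pmf.
          (\<forall>\<theta>\<in>set_pmf \<Theta>. 0 < \<theta> \<and> real \<theta> < (2 * ln (real (card \<Omega>)) / \<epsilon>) powr c \<and> \<theta> \<le> n0) \<and>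
          (\<forall>n::nat. n > n0 \<longrightarrow> (\<forall>\<mu>::(nat \<Rightarrow> nat) pmf. set_pmf \<mu> \<subseteq> configs n \<Omega> \<longrightarrow>
             measure_pmf.expectation (rand_pin n \<Theta> \<mu>)
               (\<lambda>(I, \<sigma>). cut_dist n \<Omega> (cond_dist n \<Omega> \<mu> I \<sigma>) (prod_marg n (cond_dist n \<Omega> \<mu> I \<sigma>))) < \<epsilon> \<and>
             measure_pmf.expectation (rand_subset n \<Theta>)
               (\<lambda>I. cut_dist n \<Omega> \<mu> (bar_mix n \<Omega> \<mu> I)) < \<epsilon>))))))"
proof (intro exI[of _ "10::real"] conjI allI impI)
  show "(0::real) < 10" by simp
  fix \<Omega> :: "nat set" and \<epsilon> :: real
  assume \<Omega>: "finite \<Omega> \<and> 2 \<le> card \<Omega>" and \<epsilon>: "0 < \<epsilon> \<and> \<epsilon> < 1/2"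
  have fin: "finite \<Omega>" and c2: "2 \<le> card \<Omega>" using \<Omega> by auto
  have ne: "\<Omega> \<noteq> {}" using c2 by auto
  have e0: "0 < \<epsilon>" and e1: "\<epsilon> < 1/2" using \<epsilon> by auto
  define T :: nat where "T = nat \<lceil>4 / \<epsilon>^4\<rceil> + 1"
  define n0 :: nat where "n0 = T + nat \<lceil>2 / \<epsilon>^2\<rceil>"
  have T1: "1 \<le> T" unfolding T_def by simp
  have Tge: "real T \<ge> 4 / \<epsilon>^4" unfolding T_def by linarith
  have Tle: "real T \<le> 4 / \<epsilon>^4 + 2" unfolding T_def
  proof -
    have c: "real_of_int \<lceil>4 / \<epsilon>^4\<rceil> \<le> 4 / \<epsilon>^4 + 1" using ceiling_correct[of "4 / \<epsilon>^4"] by linarith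
    have "0 < 4 / \<epsilon>^4" using e0 by simp
    then have c0: "0 \<le> \<lceil>4 / \<epsilon>^4\<rceil>" by linarith
    have "real (nat \<lceil>4 / \<epsilon>^4\<rceil>) \<le> 4 / \<epsilon>^4 + 1"
      by (subst of_nat_nat[OF c0]) (rule c)
    then show "real (nat \<lceil>4 / \<epsilon> ^ 4\<rceil> + 1) \<le> 4 / \<epsilon> ^ 4 + 2" by (simp only: of_nat_add of_nat_1)
  qed
  show "\<exists>n0::nat. n0 > 0 \<and> (\<exists>\<Theta>::nat pmf.
          (\<forall>\<theta>\<in>set_pmf \<Theta>. 0 < \<theta> \<and> real \<theta> < (2 * ln (real (card \<Omega>)) / \<epsilon>) powr 10 \<and> \<theta> \<le> n0) \<and>
          (\<forall>n::nat. n > n0 \<longrightarrow> (\<forall>\<mu>::(nat \<Rightarrow> nat) pmf. set_pmf \<mu> \<subseteq> configs n \<Omega> \<longrightarrow>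
             measure_pmf.expectation (rand_pin n \<Theta> \<mu>)
               (\<lambda>(I, \<sigma>). cut_dist n \<Omega> (cond_dist n \<Omega> \<mu> I \<sigma>) (prod_marg n (cond_dist n \<Omega> \<mu> I \<sigma>))) < \<epsilon> \<and>
             measure_pmf.expectation (rand_subset n \<Theta>)
               (\<lambda>I. cut_dist n \<Omega> \<mu> (bar_mix n \<Omega> \<mu> I)) < \<epsilon>)))"
  proof (intro exI[of _ n0] conjI exI[of _ "pmf_of_set {1..T}"])
    show "0 < n0" unfolding n0_def using T1 by simp
    show "\<forall>\<theta>\<in>set_pmf (pmf_of_set {1..T}). 0 < \<theta> \<and> real \<theta> < (2 * ln (real (card \<Omega>)) / \<epsilon>) powr 10 \<and> \<theta> \<le> n0"
    proof (intro ballI conjI)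
    fix \<theta> assume "\<theta> \<in> set_pmf (pmf_of_set {1..T})"
    then have \<theta>: "1 \<le> \<theta>" "\<theta> \<le> T" using T1 by auto
    show "0 < \<theta>" using \<theta> by simp
    show "\<theta> \<le> n0" using \<theta> unfolding n0_def by simp
    define x where "x = 1 / \<epsilon>"
    have x2: "x \<ge> 2" unfolding x_def using e0 e1 by (simp add: field_simps)
    have "ln (real (card \<Omega>)) \<ge> ln 2" using c2 by simp
    then have L: "2 * ln (real (card \<Omega>)) \<ge> 1" using ln2_ge_half by linarith
    have "real \<theta> \<le> 4 / \<epsilon>^4 + 2" using \<theta> Tle by simp
    also have "4 / \<epsilon>^4 = 4 * x^4" unfolding x_def by (simp add: power_one_over)
    also have "4 * x^4 + 2 < x^10" by (rule T_bound[OF x2])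
    also have "x^10 \<le> (2 * ln (real (card \<Omega>)) / \<epsilon>)^10"
    proof (rule power_mono)
      show "x \<le> 2 * ln (real (card \<Omega>)) / \<epsilon>" unfolding x_def using L e0 by (simp add: divide_right_mono)
    qed (use x2 in simp)
    also have "\<dots> = (2 * ln (real (card \<Omega>)) / \<epsilon>) powr 10"
    proof -
      have "0 \<le> 2 * ln (real (card \<Omega>)) / \<epsilon>" using L e0 by simp
      then show ?thesis by (simp add: powr_numeral)
    qed
    finally show "real \<theta> < (2 * ln (real (card \<Omega>)) / \<epsilon>) powr 10" .
    qed
    show "\<forall>n::nat. n > n0 \<longrightarrow> (\<forall>\<mu>::(nat \<Rightarrow> nat) pmf. set_pmf \<mu> \<subseteq> configs n \<Omega> \<longrightarrow>
             measure_pmf.expectation (rand_pin n (pmf_of_set {1..T}) \<mu>)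
               (\<lambda>(I, \<sigma>). cut_dist n \<Omega> (cond_dist n \<Omega> \<mu> I \<sigma>) (prod_marg n (cond_dist n \<Omega> \<mu> I \<sigma>))) < \<epsilon> \<and>
             measure_pmf.expectation (rand_subset n (pmf_of_set {1..T}))
               (\<lambda>I. cut_dist n \<Omega> \<mu> (bar_mix n \<Omega> \<mu> I)) < \<epsilon>)"
    proof (intro allI impI conjI)
    fix n :: nat and \<mu> :: "(nat \<Rightarrow> nat) pmf"
    assume n: "n0 < n" and supp: "set_pmf \<mu> \<subseteq> configs n \<Omega>"
    have Tn: "Suc T \<le> n" using n unfolding n0_def by simp
    have "real n > 2 / \<epsilon>^2" using n unfolding n0_def by linarith
    moreover have np: "real n > 0" using n by simp
    ultimately have "2 < real n * \<epsilon>^2" using e0 by (simp add: field_simps)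
    then have b1: "1 / real n < \<epsilon>^2 / 2" using np by (simp add: field_simps)
    have "sqrt (real T) \<ge> sqrt (4 / \<epsilon>^4)" using Tge by simp
    also have "sqrt (4 / \<epsilon>^4) = 2 / \<epsilon>^2"
      using e0 by (simp add: real_sqrt_divide power4_eq_xxxx power2_eq_square real_sqrt_mult)
    finally have "sqrt (real T) \<ge> 2 / \<epsilon>^2" .
    note sT = this
    have s0: "0 < 2 / \<epsilon>^2" using e0 by simp
    have "1 / sqrt (real T) \<le> 1 / (2 / \<epsilon>^2)"
    proof (rule divide_left_mono)
      show "0 < sqrt (real T) * (2 / \<epsilon>^2)" by (intro mult_pos_pos) (use T1 s0 in auto)
    qed (use sT in auto)
    then have b2: "1 / sqrt (real T) \<le> \<epsilon>^2 / 2" by simp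
    have B: "sqrt (1 / real n + 1 / sqrt (real T)) < \<epsilon>"
    proof -
      have "1 / real n + 1 / sqrt (real T) < \<epsilon>^2" using b1 b2 by linarith
      then have "sqrt (1 / real n + 1 / sqrt (real T)) < sqrt (\<epsilon>^2)" by (rule real_sqrt_less_mono)
      then show ?thesis using e0 by simp
    qed
    show "measure_pmf.expectation (rand_pin n (pmf_of_set {1..T}) \<mu>)
               (\<lambda>(I, \<sigma>). cut_dist n \<Omega> (cond_dist n \<Omega> \<mu> I \<sigma>) (prod_marg n (cond_dist n \<Omega> \<mu> I \<sigma>))) < \<epsilon>"
      using final_i[OF fin ne supp T1 Tn] B by linarith
    show "measure_pmf.expectation (rand_subset n (pmf_of_set {1..T}))
               (\<lambda>I. cut_dist n \<Omega> \<mu> (bar_mix n \<Omega> \<mu> I)) < \<epsilon>"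
      using final_ii[OF fin ne supp T1 Tn] B by linarith
    qed
  qed
qed

end
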